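(* Let $n\ge 2k\ge1$ and let $V$ be a set with $|V|=n$. Fix a sequence $x_1,y_1,\ldots,x_k,y_k$ of $2k$ distinct elements of $V$, for $0\le i\le k$ define $\phi_i:V^{(k)}\to\mathbb{R}$ by $\phi_i(A)=(-1)^{|A\cap\{y_1,\ldots,y_i\}|}$ if $|A\cap\{x_j,y_j\}|=1$ for all $j=1,\ldots,i$ and $\phi_i(A)=0$ otherwise, and let $V_i\subseteq\mathbb{R}^{V^{(k)}}$ be the linear span of $\{(\phi_i)_\pi:\pi\in S(V)\}$. Then: (a) For $i\ge1$ and $w:V^{(k)}\to\mathbb{R}$, $\operatorname{disc}(w,\phi_i)=0$ if and only if $w\in V_i^\perp$. (b) If $u\in V_i$ and $w\in V_j$ with $i\ne j$, then $\operatorname{disc}(u,w)=0$. (c) $\mathbb{R}^{V^{(k)}}$ is the direct sum $V_0\oplus\cdots\oplus V_k$. (d) If $u=u_0+\cdots+u_k$ with $u_i\in V_i$ for each $i$, and $(U_0,\ldots,U_k)$ is the $W$-vector of $u$, then for each $i=0,\ldots,k$ we have $U_i=0$ if and only if $u_i=\mathbf 0$. (e) If $w_1,\ldots,w_t:V^{(k)}\to\mathbb{R}$ are nonzero and satisfy $\operatorname{disc}(w_i,w_j)=0$ for all $i\ne j$, then there is a partition $[k]=I_1\cup\cdots\cup I_t$ (into pairwise disjoint, possibly empty, sets) such that $w_i\in V_0\oplus\bigoplus_{h\in I_i}V_h$ for each $i$.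
   Context: $V^{(k)}$ is the family of $k$-subsets of $V$; $S(V)$ is the symmetric group on $V$; $[k]=\{1,\dots,k\}$. Weightings $w:V^{(k)}\to\mathbb{R}$ carry the inner product $\langle w,u\rangle=\sum_{e}w(e)u(e)$ (orthogonal complements $\perp$ are taken with respect to it); $w(V)=\sum_e w(e)$, $d(w)=w(V)/\binom nk$, $w_\pi(e)=w(\pi^{-1}(e))$, and $\operatorname{disc}(w,u)=\max_{\pi\in S(V)}|\langle w_\pi,u\rangle-d(w)d(u)\binom nk|$. Note $\phi_0$ is the constant function $1$. $W$-vector (defined recursively on $k$): $W_0=|w(V)|/\binom nk$ (for $k=0$, $w$ is a single real number and $W_0=|w|$). For $k\ge1$ and distinct $x,y\in V$, $w^{xy}:(V\setminus\{x,y\})^{(k-1)}\to\mathbb{R}$ is $w^{xy}(e)=w(e\cup\{x\})-w(e\cup\{y\})$; with $(W^{xy}_0,\ldots,W^{xy}_{k-1})$ its $W$-vector, $W_i=\frac{1}{n(n-1)}\sum_{(x,y):\,x\ne y}W^{xy}_{i-1}$ for $1\le i\le k$ (average over ordered pairs of distinct vertices). *)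

theory Defs
  imports "HOL-Analysis.Analysis" "HOL-Library.Function_Algebras" "HOL-Combinatorics.Permutations"
begin

type_synonym 'a weighting = "'a set \<Rightarrow> real"

definition ksub :: "'a set \<Rightarrow> nat \<Rightarrow> 'a set set" where
  "ksub V k = {e. e \<subseteq> V \<and> card e = k}"

text \<open>Weightings of V^(k), represented as functions vanishing off V^(k).\<close>
definition WS :: "'a set \<Rightarrow> nat \<Rightarrow> 'a weighting set" where
  "WS V k = {w. \<forall>e. e \<notin> ksub V k \<longrightarrow> w e = 0}"

definition ip :: "'a set \<Rightarrow> nat \<Rightarrow> 'a weighting \<Rightarrow> 'a weighting \<Rightarrow> real" where
  "ip V k w u = (\<Sum>e\<in>ksub V k. w e * u e)"

definition wsum :: "'a set \<Rightarrow> nat \<Rightarrow> 'a weighting \<Rightarrow> real" where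
  "wsum V k w = (\<Sum>e\<in>ksub V k. w e)"

definition dens :: "'a set \<Rightarrow> nat \<Rightarrow> 'a weighting \<Rightarrow> real" where
  "dens V k w = wsum V k w / real (card V choose k)"

definition wperm :: "('a \<Rightarrow> 'a) \<Rightarrow> 'a weighting \<Rightarrow> 'a weighting" where
  "wperm \<pi> w = (\<lambda>e. w (inv \<pi> ` e))"

definition disc :: "'a set \<Rightarrow> nat \<Rightarrow> 'a weighting \<Rightarrow> 'a weighting \<Rightarrow> real" where
  "disc V k w u = Max ((\<lambda>\<pi>. \<bar>ip V k (wperm \<pi> w) u - dens V k w * dens V k u * real (card V choose k)\<bar>)
                        ` {\<pi>. \<pi> permutes V})"

definition fscale :: "real \<Rightarrow> 'a weighting \<Rightarrow> 'a weighting" where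
  "fscale c f = (\<lambda>e. c * f e)"

definition wspan :: "'a weighting set \<Rightarrow> 'a weighting set" where
  "wspan S = module.span fscale S"

definition orth :: "'a set \<Rightarrow> nat \<Rightarrow> 'a weighting set \<Rightarrow> 'a weighting set" where
  "orth V k S = {w \<in> WS V k. \<forall>u\<in>S. ip V k w u = 0}"

definition phi :: "'a set \<Rightarrow> nat \<Rightarrow> (nat \<Rightarrow> 'a) \<Rightarrow> (nat \<Rightarrow> 'a) \<Rightarrow> nat \<Rightarrow> 'a weighting" where
  "phi V k x y i A =
     (if A \<in> ksub V k \<and> (\<forall>j\<in>{1..i}. card (A \<inter> {x j, y j}) = 1)
      then (-1) ^ card (A \<inter> y ` {1..i}) else 0)"

definition Vsp :: "'a set \<Rightarrow> nat \<Rightarrow> (nat \<Rightarrow> 'a) \<Rightarrow> (nat \<Rightarrow> 'a) \<Rightarrow> nat \<Rightarrow> 'a weighting set" where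
  "Vsp V k x y i = wspan {wperm \<pi> (phi V k x y i) | \<pi>. \<pi> permutes V}"

definition Vsum :: "'a set \<Rightarrow> nat \<Rightarrow> (nat \<Rightarrow> 'a) \<Rightarrow> (nat \<Rightarrow> 'a) \<Rightarrow> nat set \<Rightarrow> 'a weighting set" where
  "Vsum V k x y S = {v. \<exists>u. (\<forall>h\<in>S. u h \<in> Vsp V k x y h) \<and> v = (\<Sum>h\<in>S. u h)}"

text \<open>W-vector: Wv k V w i is W_i of w : V^(k) -> R (meaningful for i \<le> k).\<close>
fun Wv :: "nat \<Rightarrow> 'a set \<Rightarrow> 'a weighting \<Rightarrow> nat \<Rightarrow> real" where
  "Wv k V w 0 = \<bar>wsum V k w\<bar> / real (card V choose k)"
| "Wv 0 V w (Suc i) = 0"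
| "Wv (Suc k) V w (Suc i) =
     (\<Sum>p\<in>{(a, b). a \<in> V \<and> b \<in> V \<and> a \<noteq> b}.
        Wv k (V - {fst p, snd p}) (\<lambda>e. w (insert (fst p) e) - w (insert (snd p) e)) i)
     / (real (card V) * (real (card V) - 1))"

end

theory Submission
  imports Defs
begin


global_interpretation M: module fscale
  by standard (auto simp: fscale_def fun_eq_iff algebra_simps)

lemma wspan_eq: "wspan S = M.span S" by (simp add: wspan_def)

definition ind :: "'a \<Rightarrow> 'a set \<Rightarrow> real" where
  "ind a A = (if a \<in> A then 1 else 0)"

fun psi :: "('a \<times> 'a) list \<Rightarrow> 'a set \<Rightarrow> real" where
  "psi [] A = 1"
| "psi ((a,b)#ps) A = (ind a A - ind b A) * psi ps A"

definition phi2 :: "'a set \<Rightarrow> nat \<Rightarrow> ('a \<times> 'a) list \<Rightarrow> 'a weighting" where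
  "phi2 V k ps = (\<lambda>A. if A \<in> ksub V k then psi ps A else 0)"

fun flat :: "('a \<times> 'a) list \<Rightarrow> 'a list" where
  "flat [] = []"
| "flat ((a,b)#ps) = a # b # flat ps"

definition dpl :: "'a set \<Rightarrow> ('a \<times> 'a) list \<Rightarrow> bool" where
  "dpl V ps \<longleftrightarrow> distinct (flat ps) \<and> set (flat ps) \<subseteq> V"

definition Gen :: "'a set \<Rightarrow> nat \<Rightarrow> nat \<Rightarrow> 'a weighting set" where
  "Gen V k h = {phi2 V k ps | ps. dpl V ps \<and> length ps = h}"

definition Sp :: "'a set \<Rightarrow> nat \<Rightarrow> nat \<Rightarrow> 'a weighting set" where
  "Sp V k h = M.span (Gen V k h)"

lemma fscale_apply[simp]: "fscale c f e = c * f e" by (simp add: fscale_def)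

lemma sum_fun_apply: "(\<Sum>h\<in>A. f h) e = (\<Sum>h\<in>A. (f h e :: real))"
  by (induction A rule: infinite_finite_induct) auto

lemma diff_fun_apply': "(f - g) e = f e - (g e :: real)" by simp

lemma ip_add_left: "ip V k (f + g) u = ip V k f u + ip V k g u"
  by (simp add: ip_def algebra_simps sum.distrib)
lemma ip_diff_left: "ip V k (f - g) u = ip V k f u - ip V k g u"
  by (simp add: ip_def algebra_simps sum_subtractf)
lemma ip_scale_left: "ip V k (fscale c f) u = c * ip V k f u"
  by (simp add: ip_def sum_distrib_left algebra_simps)
lemma ip_zero_left[simp]: "ip V k 0 u = 0" by (simp add: ip_def)
lemma ip_zero_right[simp]: "ip V k u 0 = 0" by (simp add: ip_def)
lemma ip_comm: "ip V k f g = ip V k g f" by (simp add: ip_def mult.commute)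
lemma ip_add_right: "ip V k u (f + g) = ip V k u f + ip V k u g"
  by (simp add: ip_def algebra_simps sum.distrib)
lemma ip_diff_right: "ip V k u (f - g) = ip V k u f - ip V k u g"
  by (simp add: ip_def algebra_simps sum_subtractf)
lemma ip_scale_right: "ip V k u (fscale c f) = c * ip V k u f"
  by (simp add: ip_def sum_distrib_left algebra_simps)
lemma ip_sum_left: "ip V k (\<Sum>h\<in>A. f h) u = (\<Sum>h\<in>A. ip V k (f h) u)"
  by (simp add: ip_def sum_fun_apply sum_distrib_right) (rule sum.swap)
lemma ip_sum_right: "ip V k u (\<Sum>h\<in>A. f h) = (\<Sum>h\<in>A. ip V k u (f h))"
  by (simp add: ip_def sum_fun_apply sum_distrib_left) (rule sum.swap)
lemma ip_cong: "(\<And>e. e \<in> ksub V k \<Longrightarrow> f e = f' e) \<Longrightarrow> (\<And>e. e \<in> ksub V k \<Longrightarrow> g e = g' e)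
   \<Longrightarrow> ip V k f g = ip V k f' g'"
  by (simp add: ip_def)

lemma finite_ksub: "finite V \<Longrightarrow> finite (ksub V k)"
  by (simp add: ksub_def)
lemma card_ksub: "finite V \<Longrightarrow> card (ksub V k) = card V choose k"
  unfolding ksub_def by (rule n_subsets)

lemma ip_self_zero:
  assumes "finite V" "w \<in> WS V k" "ip V k w w = 0" shows "w = 0"
proof -
  have "\<forall>e\<in>ksub V k. w e * w e = 0"
    using assms(3) unfolding ip_def
    by (subst (asm) sum_nonneg_eq_0_iff) (auto simp: finite_ksub assms(1))
  then show ?thesis using assms(2) unfolding WS_def by (auto simp: fun_eq_iff)
qed

lemma ip_span_right:
  assumes "v \<in> M.span S" "\<And>g. g \<in> S \<Longrightarrow> ip V k u g = 0" shows "ip V k u v = 0"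
  using assms(1)
proof (induction rule: M.span_induct_alt)
  case base then show ?case by (simp add: ip_def)
next
  case (step c x y)
  have "ip V k u (fscale c x + y) = c * ip V k u x + ip V k u y"
    by (simp only: ip_add_right ip_scale_right)
  also have "\<dots> = 0" using step assms(2) by simp
  finally show ?case .
qed

lemma ip_span_both:
  assumes "u \<in> M.span S" "v \<in> M.span T" "\<And>f g. f \<in> S \<Longrightarrow> g \<in> T \<Longrightarrow> ip V k f g = 0"
  shows "ip V k u v = 0"
proof -
  have "\<And>f. f \<in> S \<Longrightarrow> ip V k v f = 0"
    using ip_span_right[OF assms(2)] assms(3) by (metis ip_comm)
  then show ?thesis using ip_span_right[OF assms(1)] ip_comm by metis
qed

lemma WS_subspace: "M.subspace (WS V k)"
  by (auto simp: M.subspace_def WS_def)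

lemma phi2_WS: "phi2 V k ps \<in> WS V k" by (simp add: phi2_def WS_def)
lemma Gen_WS: "Gen V k h \<subseteq> WS V k" using phi2_WS by (auto simp: Gen_def)
lemma Sp_WS: "Sp V k h \<subseteq> WS V k"
  unfolding Sp_def by (rule M.span_minimal[OF Gen_WS WS_subspace])
lemma Sp_subspace: "M.subspace (Sp V k h)" unfolding Sp_def by (rule M.subspace_span)


lemma image_ksub_bij:
  assumes "\<pi> permutes V" shows "bij_betw ((`) \<pi>) (ksub V k) (ksub V k)"
proof -
  have inj: "inj \<pi>" using permutes_inj[OF assms] .
  have img: "\<pi> ` e \<in> ksub V k" if "e \<in> ksub V k" for e
    using that permutes_image[OF assms] inj by (auto simp: ksub_def card_image inj_on_subset)
  have img2: "inv \<pi> ` e \<in> ksub V k" if "e \<in> ksub V k" for e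
    using that permutes_image[OF permutes_inv[OF assms]] permutes_inj[OF permutes_inv[OF assms]]
    by (auto simp: ksub_def card_image inj_on_subset)
  show ?thesis unfolding bij_betw_def
  proof
    show "inj_on ((`) \<pi>) (ksub V k)" using inj by (auto simp: inj_on_def inj_image_eq_iff)
    show "(`) \<pi> ` ksub V k = ksub V k"
    proof
      show "(`) \<pi> ` ksub V k \<subseteq> ksub V k" using img by auto
      show "ksub V k \<subseteq> (`) \<pi> ` ksub V k"
      proof
        fix e assume "e \<in> ksub V k"
        then have "e = \<pi> ` (inv \<pi> ` e)" "inv \<pi> ` e \<in> ksub V k"
          using img2 permutes_surj[OF assms] by (auto simp: image_comp surj_iff)
        then show "e \<in> (`) \<pi> ` ksub V k" by blast
      qed
    qed
  qed
qed

lemma ksub_perm_iff: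
  assumes "\<pi> permutes V" shows "\<pi> ` e \<in> ksub V k \<longleftrightarrow> e \<in> ksub V k"
proof
  assume "e \<in> ksub V k" then show "\<pi> ` e \<in> ksub V k"
    using image_ksub_bij[OF assms] by (auto simp: bij_betw_def)
next
  assume a: "\<pi> ` e \<in> ksub V k"
  have "inv \<pi> ` (\<pi> ` e) \<in> ksub V k"
    using image_ksub_bij[OF permutes_inv[OF assms]] a by (auto simp: bij_betw_def)
  then show "e \<in> ksub V k" using permutes_inj[OF assms] by (simp add: image_comp)
qed

lemma wperm_ip:
  assumes "\<pi> permutes V"
  shows "ip V k (wperm \<pi> w) u = ip V k w (wperm (inv \<pi>) u)"
proof -
  have "ip V k (wperm \<pi> w) u = (\<Sum>e\<in>ksub V k. w (inv \<pi> ` e) * u e)"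
    by (simp add: ip_def wperm_def)
  also have "\<dots> = (\<Sum>e\<in>ksub V k. w (inv \<pi> ` (\<pi> ` e)) * u (\<pi> ` e))"
    by (rule sum.reindex_bij_betw[symmetric, OF image_ksub_bij[OF assms]])
  also have "\<dots> = (\<Sum>e\<in>ksub V k. w e * u (\<pi> ` e))"
    using permutes_inj[OF assms] by (simp add: image_comp)
  also have "\<dots> = ip V k w (wperm (inv \<pi>) u)"
    by (simp add: ip_def wperm_def permutes_inv_inv[OF assms])
  finally show ?thesis .
qed

lemma wperm_comp:
  assumes "\<pi> permutes V" "\<sigma> permutes V"
  shows "wperm \<pi> (wperm \<sigma> w) = wperm (\<pi> \<circ> \<sigma>) w"
proof -
  have "inv (\<pi> \<circ> \<sigma>) = inv \<sigma> \<circ> inv \<pi>"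
    using assms by (simp add: o_inv_distrib permutes_bij)
  then show ?thesis by (simp add: wperm_def fun_eq_iff image_comp)
qed

lemma wperm_id: "wperm id w = w" by (simp add: wperm_def)

lemma wperm_add: "wperm \<pi> (f + g) = wperm \<pi> f + wperm \<pi> g" by (simp add: wperm_def fun_eq_iff)
lemma wperm_diff: "wperm \<pi> (f - g) = wperm \<pi> f - wperm \<pi> g" by (simp add: wperm_def fun_eq_iff)
lemma wperm_scale: "wperm \<pi> (fscale c f) = fscale c (wperm \<pi> f)" by (simp add: wperm_def fun_eq_iff)
lemma wperm_zero: "wperm \<pi> 0 = 0" by (simp add: wperm_def fun_eq_iff)
lemma wperm_sum: "wperm \<pi> (\<Sum>h\<in>A. f h) = (\<Sum>h\<in>A. wperm \<pi> (f h))"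
  by (simp add: wperm_def fun_eq_iff sum_fun_apply)

lemma WS_wperm: assumes "\<pi> permutes V" "w \<in> WS V k" shows "wperm \<pi> w \<in> WS V k"
  using assms ksub_perm_iff[OF permutes_inv[OF assms(1)]] by (auto simp: WS_def wperm_def)

lemma ind_inv_image: assumes "\<pi> permutes V" shows "ind a (inv \<pi> ` A) = ind (\<pi> a) A"
proof -
  have "a \<in> inv \<pi> ` A \<longleftrightarrow> \<pi> a \<in> A"
    using permutes_inverses[OF assms] by (metis image_iff)
  then show ?thesis by (simp add: ind_def)
qed

lemma psi_inv_image: assumes "\<pi> permutes V"
  shows "psi ps (inv \<pi> ` A) = psi (map (map_prod \<pi> \<pi>) ps) A"
  by (induction ps rule: flat.induct) (auto simp: ind_inv_image[OF assms])

lemma wperm_phi2: assumes "\<pi> permutes V"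
  shows "wperm \<pi> (phi2 V k ps) = phi2 V k (map (map_prod \<pi> \<pi>) ps)"
  using ksub_perm_iff[OF permutes_inv[OF assms]] psi_inv_image[OF assms]
  by (simp add: wperm_def phi2_def fun_eq_iff)

lemma flat_map: "flat (map (map_prod f f) ps) = map f (flat ps)"
  by (induction ps rule: flat.induct) auto

lemma length_flat: "length (flat ps) = 2 * length ps"
  by (induction ps rule: flat.induct) auto

lemma flat_inj: "length ps = length qs \<Longrightarrow> flat ps = flat qs \<Longrightarrow> ps = qs"
proof (induction ps arbitrary: qs rule: flat.induct)
  case 1 then show ?case by simp
next
  case (2 a b ps) then show ?case by (cases qs) auto
qed

lemma dpl_map: assumes "\<pi> permutes V" "dpl V ps" shows "dpl V (map (map_prod \<pi> \<pi>) ps)"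
  using assms permutes_inj[OF assms(1)] permutes_in_image[OF assms(1)]
  by (auto simp: dpl_def flat_map distinct_map inj_on_subset)

lemma Sp_wperm: assumes "\<pi> permutes V" "u \<in> Sp V k h" shows "wperm \<pi> u \<in> Sp V k h"
  using assms(2) unfolding Sp_def
proof (induction rule: M.span_induct_alt)
  case base then show ?case by (simp only: wperm_zero) (rule M.span_zero)
next
  case (step c x y)
  have "wperm \<pi> x \<in> Gen V k h" using step(1) wperm_phi2[OF assms(1)] dpl_map[OF assms(1)]
    by (auto simp: Gen_def)
  then show ?case using step
    by (simp only: wperm_add wperm_scale) (meson M.span_add M.span_scale M.span_base)
qed

lemma exists_perm_list:
  assumes "distinct xs" "distinct ys" "set xs \<subseteq> V" "set ys \<subseteq> V" "length xs = length ys"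
  shows "\<exists>\<pi>. \<pi> permutes V \<and> map \<pi> xs = ys"
  using assms
proof (induction xs arbitrary: ys)
  case Nil then show ?case by (auto intro: permutes_id)
next
  case (Cons x xs)
  then obtain y ys' where ys: "ys = y # ys'" by (cases ys) auto
  with Cons obtain \<pi> where \<pi>: "\<pi> permutes V" "map \<pi> xs = ys'" by auto
  define \<sigma> where "\<sigma> = Transposition.transpose y (\<pi> x) \<circ> \<pi>"
  have "\<pi> x \<in> V" using \<pi>(1) Cons.prems permutes_in_image by fastforce
  then have \<sigma>p: "\<sigma> permutes V" unfolding \<sigma>_def using Cons.prems ys
    by (intro permutes_compose \<pi>(1) permutes_swap_id) auto
  have "\<sigma> x = y" by (simp add: \<sigma>_def)
  moreover have "\<sigma> z = \<pi> z" if "z \<in> set xs" for z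
  proof -
    have "\<pi> z \<in> set ys'" using \<pi>(2) that by auto
    moreover have "\<pi> z \<noteq> \<pi> x" using permutes_inj[OF \<pi>(1)] Cons.prems that by (metis distinct.simps(2) injD)
    moreover have "\<pi> z \<noteq> y" using calculation Cons.prems ys by auto
    ultimately show ?thesis by (simp add: \<sigma>_def transpose_apply_other)
  qed
  ultimately have "map \<sigma> (x # xs) = ys" using \<pi>(2) ys by auto
  with \<sigma>p show ?case by blast
qed

lemma exists_perm_dpl:
  assumes "dpl V ps" "dpl V qs" "length ps = length qs"
  shows "\<exists>\<pi>. \<pi> permutes V \<and> map (map_prod \<pi> \<pi>) ps = qs"
proof -
  obtain \<pi> where "\<pi> permutes V" "map \<pi> (flat ps) = flat qs"
    using exists_perm_list[of "flat ps" "flat qs" V] assms by (auto simp: dpl_def length_flat)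
  then show ?thesis using flat_inj[of "map (map_prod \<pi> \<pi>) ps" qs] assms(3)
    by (auto simp: flat_map)
qed


definition dif :: "'a \<Rightarrow> 'a \<Rightarrow> 'a weighting \<Rightarrow> 'a weighting" where
  "dif a b w = (\<lambda>B. w (insert a (B - {b})) - w (insert b (B - {a})))"

definition lift :: "'a \<Rightarrow> 'a \<Rightarrow> 'a weighting \<Rightarrow> 'a weighting" where
  "lift a b g = (\<lambda>A. (ind a A - ind b A) * g (A - {a, b}))"

fun Dd :: "('a \<times> 'a) list \<Rightarrow> 'a weighting \<Rightarrow> 'a weighting" where
  "Dd [] w = w"
| "Dd ((a,b)#ps) w = Dd ps (dif a b w)"

abbreviation pset :: "('a \<times> 'a) list \<Rightarrow> 'a set" where "pset ps \<equiv> set (flat ps)"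

lemma flat_append: "flat (ps @ qs) = flat ps @ flat qs"
  by (induction ps rule: flat.induct) auto

lemma dpl_Cons: "dpl V ((a,b)#ps) \<longleftrightarrow> a \<noteq> b \<and> a \<notin> pset ps \<and> b \<notin> pset ps \<and> a \<in> V \<and> b \<in> V
   \<and> dpl (V - {a,b}) ps"
  by (auto simp: dpl_def)

lemma dpl_append: "dpl V (ps @ qs) \<longleftrightarrow> dpl V ps \<and> dpl (V - pset ps) qs"
  by (auto simp: dpl_def flat_append)

lemma dpl_Nil[simp]: "dpl V []" by (simp add: dpl_def)

lemma psi_diff: "pset qs \<inter> X = {} \<Longrightarrow> psi qs (A - X) = psi qs A"
  by (induction qs rule: flat.induct) (auto simp: ind_def)

lemma ksub_fin: "finite V \<Longrightarrow> e \<in> ksub V k \<Longrightarrow> finite e"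
  by (auto simp: ksub_def intro: finite_subset)

lemma bij_insert_ksub:
  assumes "finite V" "a \<in> V" "b \<in> V" "a \<noteq> b"
  shows "bij_betw (insert a) (ksub (V - {a,b}) k) {A \<in> ksub V (Suc k). a \<in> A \<and> b \<notin> A}"
proof (rule bij_betw_byWitness[where f' = "\<lambda>A. A - {a}"])
  show "\<forall>B\<in>ksub (V - {a, b}) k. insert a B - {a} = B" by (auto simp: ksub_def)
  show "\<forall>A\<in>{A \<in> ksub V (Suc k). a \<in> A \<and> b \<notin> A}. insert a (A - {a}) = A" by auto
  show "insert a ` ksub (V - {a, b}) k \<subseteq> {A \<in> ksub V (Suc k). a \<in> A \<and> b \<notin> A}"
  proof
    fix A assume "A \<in> insert a ` ksub (V - {a, b}) k"
    then obtain B where B: "B \<in> ksub (V - {a,b}) k" "A = insert a B" by auto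
    have "finite B" using B(1) assms(1) by (auto simp: ksub_def intro: finite_subset)
    moreover have "a \<notin> B" using B(1) by (auto simp: ksub_def)
    ultimately show "A \<in> {A \<in> ksub V (Suc k). a \<in> A \<and> b \<notin> A}" using B assms by (auto simp: ksub_def)
  qed
  show "(\<lambda>A. A - {a}) ` {A \<in> ksub V (Suc k). a \<in> A \<and> b \<notin> A} \<subseteq> ksub (V - {a, b}) k"
  proof
    fix B assume "B \<in> (\<lambda>A. A - {a}) ` {A \<in> ksub V (Suc k). a \<in> A \<and> b \<notin> A}"
    then obtain A where A: "A \<in> ksub V (Suc k)" "a \<in> A" "b \<notin> A" "B = A - {a}" by auto
    have "finite A" using A(1) assms(1) by (auto simp: ksub_def intro: finite_subset)
    then show "B \<in> ksub (V - {a, b}) k" using A by (auto simp: ksub_def)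
  qed
qed

lemma sum_split_ab:
  assumes "finite V" "a \<in> V" "b \<in> V" "a \<noteq> b"
  shows "(\<Sum>A\<in>ksub V (Suc k). if a \<in> A \<and> b \<notin> A then F A else 0)
       = (\<Sum>B\<in>ksub (V - {a,b}) k. F (insert a B))"
proof -
  have "(\<Sum>A\<in>ksub V (Suc k). if a \<in> A \<and> b \<notin> A then F A else 0)
     = (\<Sum>A\<in>{A \<in> ksub V (Suc k). a \<in> A \<and> b \<notin> A}. F A)"
    by (simp add: sum.inter_filter finite_ksub assms(1))
  also have "\<dots> = (\<Sum>B\<in>ksub (V - {a,b}) k. F (insert a B))"
    by (rule sum.reindex_bij_betw[symmetric, OF bij_insert_ksub[OF assms]])
  finally show ?thesis .
qed

lemma adj_lift:
  assumes "finite V" "a \<in> V" "b \<in> V" "a \<noteq> b"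
  shows "ip V (Suc k) w (lift a b g) = ip (V - {a,b}) k (dif a b w) g"
proof -
  have eq: "w A * ((ind a A - ind b A) * g (A - {a,b}))
     = (if a \<in> A \<and> b \<notin> A then w A * g (A - {a,b}) else 0)
     - (if b \<in> A \<and> a \<notin> A then w A * g (A - {b,a}) else 0)" for A
    by (auto simp: ind_def insert_commute)
  have "ip V (Suc k) w (lift a b g)
     = (\<Sum>A\<in>ksub V (Suc k). if a \<in> A \<and> b \<notin> A then w A * g (A - {a,b}) else 0)
     - (\<Sum>A\<in>ksub V (Suc k). if b \<in> A \<and> a \<notin> A then w A * g (A - {b,a}) else 0)"
    unfolding ip_def lift_def eq by (simp add: sum_subtractf)
  also have "\<dots> = (\<Sum>B\<in>ksub (V - {a,b}) k. w (insert a B) * g (insert a B - {a,b}))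
     - (\<Sum>B\<in>ksub (V - {b,a}) k. w (insert b B) * g (insert b B - {b,a}))"
    using sum_split_ab[OF assms, where k=k and F="\<lambda>A. w A * g (A - {a,b})"]
      sum_split_ab[OF assms(1,3,2) assms(4)[symmetric], where k=k and F="\<lambda>A. w A * g (A - {b,a})"]
    by (simp only:)
  also have "\<dots> = (\<Sum>B\<in>ksub (V - {a,b}) k. (w (insert a B) - w (insert b B)) * g B)"
  proof -
    have "insert a B - {a,b} = B" "insert b B - {b,a} = B" if "B \<in> ksub (V - {a,b}) k" for B
      using that by (auto simp: ksub_def)
    then show ?thesis by (simp add: insert_commute sum_subtractf algebra_simps)
  qed
  also have "\<dots> = ip (V - {a,b}) k (dif a b w) g"
  proof -
    have "insert a (B - {b}) = insert a B" "insert b (B - {a}) = insert b B" if "B \<in> ksub (V - {a,b}) k" for B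
      using that by (auto simp: ksub_def)
    then show ?thesis unfolding ip_def dif_def by (intro sum.cong) auto
  qed
  finally show ?thesis .
qed

lemma phi2_Cons_lift:
  assumes "dpl V ((a,b)#qs)" "e \<in> ksub V (Suc k)" "finite V"
  shows "phi2 V (Suc k) ((a,b)#qs) e = lift a b (phi2 (V - {a,b}) k qs) e"
proof -
  have d: "a \<noteq> b" "a \<notin> pset qs" "b \<notin> pset qs" using assms(1) by (auto simp: dpl_Cons)
  have fe: "finite e" using ksub_fin[OF assms(3,2)] .
  show ?thesis
  proof (cases "(a \<in> e) = (b \<in> e)")
    case True then show ?thesis using assms by (auto simp: phi2_def lift_def ind_def)
  next
    case False
    have "e - {a,b} \<in> ksub (V - {a,b}) k"
      using False assms(2) fe by (auto simp: ksub_def card_Diff_subset_Int)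
    moreover have "psi qs (e - {a,b}) = psi qs e" using d by (intro psi_diff) auto
    ultimately show ?thesis using assms(2) by (simp add: phi2_def lift_def)
  qed
qed

lemma adj1:
  assumes "finite V" "dpl V ((a,b)#qs)"
  shows "ip V (Suc k) w (phi2 V (Suc k) ((a,b)#qs)) = ip (V - {a,b}) k (dif a b w) (phi2 (V - {a,b}) k qs)"
proof -
  have "ip V (Suc k) w (phi2 V (Suc k) ((a,b)#qs)) = ip V (Suc k) w (lift a b (phi2 (V - {a,b}) k qs))"
    using phi2_Cons_lift[OF assms(2) _ assms(1)] by (intro ip_cong) auto
  also have "\<dots> = ip (V - {a,b}) k (dif a b w) (phi2 (V - {a,b}) k qs)"
    using assms by (intro adj_lift) (auto simp: dpl_Cons)
  finally show ?thesis .
qed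

lemma adjD:
  assumes "finite V" "dpl V (ps @ qs)" "length ps \<le> k"
  shows "ip V k w (phi2 V k (ps @ qs))
       = ip (V - pset ps) (k - length ps) (Dd ps w) (phi2 (V - pset ps) (k - length ps) qs)"
  using assms
proof (induction ps arbitrary: V k w rule: flat.induct)
  case 1 then show ?case by simp
next
  case (2 a b ps)
  then obtain k' where k: "k = Suc k'" by (cases k) auto
  have dV: "dpl (V - {a,b}) (ps @ qs)" using 2(3) by (simp add: dpl_Cons)
  have "ip V k w (phi2 V k (((a,b)#ps) @ qs)) = ip (V - {a,b}) k' (dif a b w) (phi2 (V - {a,b}) k' (ps @ qs))"
    using adj1[of V a b "ps @ qs" k' w] 2(2,3) k by simp
  also have "\<dots> = ip (V - {a,b} - pset ps) (k' - length ps) (Dd ps (dif a b w))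
       (phi2 (V - {a,b} - pset ps) (k' - length ps) qs)"
    using 2(1)[OF _ dV] 2(2,4) k by simp
  also have "V - {a,b} - pset ps = V - pset ((a,b)#ps)" by auto
  finally show ?case using k by simp
qed

lemma dif_cong:
  assumes "finite V" "a \<in> V" "b \<in> V" "a \<noteq> b" "\<And>e. e \<in> ksub V (Suc k) \<Longrightarrow> f e = g e"
    "B \<in> ksub (V - {a,b}) k"
  shows "dif a b f B = dif a b g B"
proof -
  have fB: "finite B" using assms(1,6) by (auto simp: ksub_def intro: finite_subset)
  have "a \<notin> B" "b \<notin> B" using assms(6) by (auto simp: ksub_def)
  then have "B - {b} = B" "B - {a} = B" by auto
  have "insert a (B - {b}) \<in> ksub V (Suc k)" "insert b (B - {a}) \<in> ksub V (Suc k)"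
    using assms(2-4,6) fB \<open>a \<notin> B\<close> \<open>b \<notin> B\<close> \<open>B - {b} = B\<close> \<open>B - {a} = B\<close>
    by (auto simp: ksub_def)
  then show ?thesis using assms(5) by (simp add: dif_def)
qed

lemma Dd_cong:
  assumes "finite V" "dpl V ps" "length ps \<le> k" "\<And>e. e \<in> ksub V k \<Longrightarrow> f e = g e"
    "B \<in> ksub (V - pset ps) (k - length ps)"
  shows "Dd ps f B = Dd ps g B"
  using assms
proof (induction ps arbitrary: V k f g rule: flat.induct)
  case 1 then show ?case by simp
next
  case (2 a b ps)
  then obtain k' where k: "k = Suc k'" by (cases k) auto
  have d: "a \<in> V" "b \<in> V" "a \<noteq> b" "dpl (V - {a,b}) ps" using 2(3) by (auto simp: dpl_Cons)
  have "V - {a,b} - pset ps = V - pset ((a,b)#ps)" by auto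
  then show ?case using 2(1)[OF _ d(4), of k' "dif a b f" "dif a b g"] 2(2,4,6) k
      dif_cong[OF 2(2) d(1-3), of k' f g] 2(5) by auto
qed

lemma dif_add: "dif a b (f + g) = dif a b f + dif a b g" by (simp add: dif_def fun_eq_iff)
lemma dif_scale: "dif a b (fscale c f) = fscale c (dif a b f)" by (simp add: dif_def fun_eq_iff algebra_simps)
lemma dif_zero: "dif a b 0 = 0" by (simp add: dif_def fun_eq_iff)
lemma dif_zero'[simp]: "dif a b (\<lambda>_. 0) = (\<lambda>_. 0)" by (simp add: dif_def)
lemma span_zero': "(\<lambda>_. 0::real) \<in> M.span S" using M.span_zero[of S] unfolding zero_fun_def .
lemma dif_diff: "dif a b (f - g) = dif a b f - dif a b g" by (simp add: dif_def fun_eq_iff)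
lemma Dd_zero': "Dd ps (\<lambda>_. 0) = (\<lambda>_. 0)" by (induction ps rule: flat.induct) auto
lemma Dd_zero: "Dd ps 0 = 0" using Dd_zero' unfolding zero_fun_def .
lemma Dd_add: "Dd ps (f + g) = Dd ps f + Dd ps g"
  by (induction ps arbitrary: f g rule: flat.induct) (auto simp: dif_add)
lemma Dd_scale: "Dd ps (fscale c f) = fscale c (Dd ps f)"
  by (induction ps arbitrary: f rule: flat.induct) (auto simp: dif_scale)
lemma Dd_diff: "Dd ps (f - g) = Dd ps f - Dd ps g"
  by (induction ps arbitrary: f g rule: flat.induct) (auto simp: dif_diff)

definition mono :: "'a set \<Rightarrow> 'a weighting" where
  "mono T = (\<lambda>A. if T \<subseteq> A then 1 else 0)"

definition Pd :: "nat \<Rightarrow> 'a weighting set" where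
  "Pd d = M.span {mono T | T. finite T \<and> card T \<le> d}"

lemma dif_mono:
  assumes "a \<noteq> b"
  shows "dif a b (mono T) = (if a \<in> T \<and> b \<notin> T then mono (T - {a})
     else if b \<in> T \<and> a \<notin> T then fscale (-1) (mono (T - {b})) else 0)"
  using assms by (auto simp: dif_def mono_def fun_eq_iff)

lemma dif_Pd:
  assumes "a \<noteq> b" "g \<in> Pd d"
  shows "(d = 0 \<longrightarrow> dif a b g = 0) \<and> (\<forall>d'. d = Suc d' \<longrightarrow> dif a b g \<in> Pd d')"
  using assms(2) unfolding Pd_def
proof (induction rule: M.span_induct_alt)
  case base show ?case by (simp only: dif_zero M.span_zero simp_thms)
next
  case (step c x y)
  then obtain T where T: "x = mono T" "finite T" "card T \<le> d" by auto
  have x0: "d = 0 \<longrightarrow> dif a b x = 0" using T dif_mono[OF assms(1), of T] by auto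
  have x1: "dif a b x \<in> M.span {mono T |T. finite T \<and> card T \<le> d'}" if "d = Suc d'" for d'
  proof -
    have m1: "mono (T - {z}) \<in> M.span {mono T |T. finite T \<and> card T \<le> d'}" if "z \<in> T" for z
    proof -
      have "card (T - {z}) \<le> d'" using that T \<open>d = Suc d'\<close> by (simp add: card_Diff_singleton)
      then show ?thesis using T by (auto intro!: M.span_base)
    qed
    have m2: "- mono (T - {b}) \<in> M.span {mono T |T. finite T \<and> card T \<le> d'}" if "b \<in> T"
      using m1[of b] that by (auto intro!: M.span_neg)
    show ?thesis
    proof (cases "a \<in> T \<and> b \<notin> T")
      case True then show ?thesis using T dif_mono[OF assms(1), of T] m1 by simp
    next
      case F1: False
      show ?thesis
      proof (cases "b \<in> T \<and> a \<notin> T")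
        case True
        have "dif a b x = - mono (T - {b})" using dif_mono[OF assms(1), of T] True unfolding T(1) by (simp add: fun_eq_iff)
        then show ?thesis using m2 True by simp
      next
        case False
        then have "dif a b x = 0" using dif_mono[OF assms(1), of T] F1 unfolding T(1) by (simp only: if_False)
        then show ?thesis using M.span_zero by simp
      qed
    qed
  qed
  have e: "dif a b (fscale c x + y) = fscale c (dif a b x) + dif a b y" by (simp only: dif_add dif_scale)
  show ?case
  proof (intro conjI allI impI)
    assume "d = 0"
    then have "dif a b x = 0" "dif a b y = 0" using x0 step(2) by auto
    then show "dif a b (fscale c x + y) = 0" unfolding e by (simp add: fun_eq_iff)
  next
    fix d' assume d: "d = Suc d'"
    have "dif a b y \<in> M.span {mono T |T. finite T \<and> card T \<le> d'}" using step(2) d by blast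
    then show "dif a b (fscale c x + y) \<in> M.span {mono T |T. finite T \<and> card T \<le> d'}"
      unfolding e using x1[OF d] by (intro M.span_add M.span_scale)
  qed
qed

lemma Dd_Pd:
  assumes "\<forall>(a,b)\<in>set ps. a \<noteq> b" "g \<in> Pd d" "d < length ps"
  shows "Dd ps g = 0"
  using assms
proof (induction ps arbitrary: d g rule: flat.induct)
  case 1 then show ?case by simp
next
  case (2 a b ps)
  show ?case
  proof (cases d)
    case 0 then show ?thesis using dif_Pd[of a b g d] 2 by (simp add: Dd_zero)
  next
    case (Suc d')
    then show ?thesis using dif_Pd[of a b g d] 2 by auto
  qed
qed

lemma ind_mult_Pd:
  assumes "f \<in> Pd d" shows "(\<lambda>A. ind a A * f A) \<in> Pd (Suc d)"
  using assms unfolding Pd_def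
proof (induction rule: M.span_induct_alt)
  case base have "(\<lambda>A. ind a A * (0::'a weighting) A) = 0" by (simp add: fun_eq_iff)
    then show ?case using M.span_zero by metis
next
  case (step c x y)
  then obtain T where T: "x = mono T" "finite T" "card T \<le> d" by auto
  have "(\<lambda>A. ind a A * x A) = mono (insert a T)" using T by (auto simp: mono_def ind_def fun_eq_iff)
  moreover have "card (insert a T) \<le> Suc d" using T by (simp add: card_insert_if)
  ultimately have "(\<lambda>A. ind a A * x A) \<in> M.span {mono T |T. finite T \<and> card T \<le> Suc d}"
    using T by (auto intro!: M.span_base)
  then have "fscale c (\<lambda>A. ind a A * x A) + (\<lambda>A. ind a A * y A) \<in> M.span {mono T |T. finite T \<and> card T \<le> Suc d}"
    using step by (intro M.span_add M.span_scale)
  moreover have "fscale c (\<lambda>A. ind a A * x A) + (\<lambda>A. ind a A * y A) = (\<lambda>A. ind a A * (fscale c x + y) A)"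
    by (simp add: fun_eq_iff algebra_simps)
  ultimately show ?case by (simp only:)
qed

lemma psi_Pd: "psi qs \<in> Pd (length qs)"
proof (induction qs rule: flat.induct)
  case 1
  have e: "psi [] = mono {}" by (simp add: mono_def fun_eq_iff)
  have "mono {} \<in> Pd 0" unfolding Pd_def by (rule M.span_base) auto
  then show ?case by (simp only: e list.size(3))
next
  case (2 a b qs)
  have "psi ((a,b)#qs) = (\<lambda>A. ind a A * psi qs A) - (\<lambda>A. ind b A * psi qs A)"
    by (simp add: fun_eq_iff algebra_simps)
  then show ?case using ind_mult_Pd[OF 2] unfolding Pd_def by (simp only: M.span_diff length_Cons)
qed

lemma dpl_neq: "dpl V ps \<Longrightarrow> \<forall>(a,b)\<in>set ps. a \<noteq> b"
  by (induction ps arbitrary: V rule: flat.induct) (auto simp: dpl_Cons)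

lemma orth_phi2_lt:
  assumes "finite V" "dpl V ps" "dpl V qs" "length qs < length ps" "length ps \<le> k"
  shows "ip V k (phi2 V k qs) (phi2 V k ps) = 0"
proof -
  have "ip V k (phi2 V k qs) (phi2 V k (ps @ [])) =
     ip (V - pset ps) (k - length ps) (Dd ps (phi2 V k qs)) (phi2 (V - pset ps) (k - length ps) [])"
    using assms by (intro adjD) auto
  also have "\<dots> = ip (V - pset ps) (k - length ps) (Dd ps (psi qs)) (phi2 (V - pset ps) (k - length ps) [])"
    using assms by (intro ip_cong Dd_cong) (auto simp: phi2_def)
  also have "Dd ps (psi qs) = 0"
    using assms(2,4) psi_Pd[of qs] dpl_neq[OF assms(2)] by (intro Dd_Pd[of ps _ "length qs"]) auto
  finally show ?thesis by (simp add: ip_def)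
qed

lemma orth_phi2:
  assumes "finite V" "dpl V ps" "dpl V qs" "length qs \<noteq> length ps" "length ps \<le> k" "length qs \<le> k"
  shows "ip V k (phi2 V k qs) (phi2 V k ps) = 0"
  using assms orth_phi2_lt[of V ps qs k] orth_phi2_lt[of V qs ps k] ip_comm
  by (metis linorder_neqE_nat)

lemma orth_Sp:
  assumes "finite V" "u \<in> Sp V k i" "v \<in> Sp V k j" "i \<noteq> j" "i \<le> k" "j \<le> k"
  shows "ip V k u v = 0"
  using assms(2,3) unfolding Sp_def
  by (rule ip_span_both) (use assms orth_phi2 in \<open>auto simp: Gen_def\<close>)

lemma wsum_ip: "wsum V k f = ip V k f (phi2 V k [])"
  by (simp add: wsum_def ip_def phi2_def)


lemma ksub_0: "finite V \<Longrightarrow> ksub V 0 = {{}}"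
  apply (auto simp: ksub_def)
  by (metis card_0_eq empty_iff finite_subset)

lemma conn:
  assumes "finite V"
    and H: "\<And>a b B. a \<in> V \<Longrightarrow> b \<in> V \<Longrightarrow> a \<noteq> b \<Longrightarrow> B \<in> ksub (V - {a,b}) k \<Longrightarrow> w (insert a B) = w (insert b B)"
  shows "A \<in> ksub V (Suc k) \<Longrightarrow> A' \<in> ksub V (Suc k) \<Longrightarrow> w A = w A'"
proof (induction "card (A - A')" arbitrary: A rule: less_induct)
  case less
  show ?case
  proof (cases "A = A'")
    case True then show ?thesis by simp
  next
    case False
    have fA: "finite A" "finite A'" using less.prems assms(1) by (auto simp: ksub_def intro: finite_subset)
    have cA: "card A = card A'" using less.prems by (simp add: ksub_def)
    have "\<not> A \<subseteq> A'" using False cA fA card_subset_eq by blast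
    then obtain b where b: "b \<in> A" "b \<notin> A'" by auto
    have "\<not> A' \<subseteq> A" using False cA fA card_subset_eq by metis
    then obtain a where a: "a \<in> A'" "a \<notin> A" by auto
    define B where "B = A - {b}"
    have B: "B \<in> ksub (V - {a,b}) k" using less.prems(1) a b fA by (auto simp: ksub_def B_def)
    have AV: "a \<in> V" "b \<in> V" using a b less.prems by (auto simp: ksub_def)
    have "w A = w (insert b B)" using b by (simp add: B_def insert_absorb)
    also have "\<dots> = w (insert a B)" using H[OF AV(2,1) _ ] B a b by (metis insert_commute)
    also have "\<dots> = w A'"
    proof (rule less.hyps)
      have "insert a B - A' = (A - A') - {b}" using a b by (auto simp: B_def)
      moreover have "card (A - A') > 0" using b fA by (auto simp: card_gt_0_iff)
      ultimately show "card (insert a B - A') < card (A - A')" using b fA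
        by (simp add: card_Diff1_less)
      show "insert a B \<in> ksub V (Suc k)" using B AV fA by (auto simp: ksub_def B_def card_insert_if)
      show "A' \<in> ksub V (Suc k)" by fact
    qed
    finally show ?thesis .
  qed
qed

lemma card_ksub_pos: "finite V \<Longrightarrow> k \<le> card V \<Longrightarrow> card (ksub V k) > 0"
  by (simp add: card_ksub)

lemma complete:
  assumes "finite V" "2 * k \<le> card V" "w \<in> WS V k"
    "\<And>ps. dpl V ps \<Longrightarrow> length ps \<le> k \<Longrightarrow> ip V k w (phi2 V k ps) = 0"
  shows "w = 0"
  using assms
proof (induction k arbitrary: V w)
  case 0
  have "ip V 0 w (phi2 V 0 []) = w {}" using ksub_0[OF 0(1)] by (simp add: ip_def phi2_def)
  then have "w {} = 0" using 0(4)[of "[]"] by simp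
  have "w e = 0" for e using 0(3) ksub_0[OF 0(1)] \<open>w {} = 0\<close> by (cases "e = {}") (auto simp: WS_def)
  then show ?case by (simp add: fun_eq_iff)
next
  case (Suc k)
  have H: "w (insert a B) = w (insert b B)"
    if ab: "a \<in> V" "b \<in> V" "a \<noteq> b" and B: "B \<in> ksub (V - {a,b}) k" for a b B
  proof -
    define g where "g = (\<lambda>B. if B \<in> ksub (V - {a,b}) k then dif a b w B else 0)"
    have "g = 0"
    proof (rule Suc.IH)
      show "finite (V - {a,b})" using Suc.prems by simp
      show "2 * k \<le> card (V - {a, b})" using Suc.prems(2) ab by (simp add: card_Diff_subset)
      show "g \<in> WS (V - {a, b}) k" by (simp add: g_def WS_def)
      fix qs assume qs: "dpl (V - {a, b}) qs" "length qs \<le> k"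
      have "ip (V - {a,b}) k g (phi2 (V - {a, b}) k qs) = ip (V - {a,b}) k (dif a b w) (phi2 (V - {a, b}) k qs)"
        by (rule ip_cong) (auto simp: g_def)
      also have "\<dots> = ip V (Suc k) w (phi2 V (Suc k) ((a,b)#qs))"
        using qs ab Suc.prems(1) by (intro adj1[symmetric]) (auto simp: dpl_Cons dpl_def)
      also have "\<dots> = 0"
      proof -
        have "dpl V ((a,b)#qs)" using qs ab by (auto simp: dpl_Cons dpl_def)
        then show ?thesis using Suc.prems(4) qs by simp
      qed
      finally show "ip (V - {a,b}) k g (phi2 (V - {a, b}) k qs) = 0" .
    qed
    then have "dif a b w B = 0" using B by (metis g_def zero_fun_apply)
    moreover have "insert a (B - {b}) = insert a B" "insert b (B - {a}) = insert b B"
      using B by (auto simp: ksub_def)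
    ultimately show ?thesis by (simp add: dif_def)
  qed
  have cpos: "card (ksub V (Suc k)) > 0" using card_ksub_pos[OF Suc.prems(1), of "Suc k"] Suc.prems(2) by simp
  then obtain A0 where A0: "A0 \<in> ksub V (Suc k)" by (metis card_gt_0_iff ex_in_conv)
  define c where "c = w A0"
  have const: "w A = c" if "A \<in> ksub V (Suc k)" for A
    using conn[where V=V and k=k and w=w, OF Suc.prems(1) H that A0] by (simp add: c_def)
  have "ip V (Suc k) w (phi2 V (Suc k) []) = (\<Sum>A\<in>ksub V (Suc k). c)"
    unfolding ip_def phi2_def by (intro sum.cong) (auto simp: const)
  also have "\<dots> = c * card (ksub V (Suc k))" by simp
  finally have "c * card (ksub V (Suc k)) = 0" using Suc.prems(4)[of "[]"] by simp
  moreover have "card (ksub V (Suc k)) > 0" using card_ksub_pos[OF Suc.prems(1), of "Suc k"] Suc.prems(2) by simp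
  ultimately have "c = 0" by simp
  then show ?case using const Suc.prems(3) by (auto simp: WS_def fun_eq_iff)
qed

lemma GS:
  assumes "finite G" "G \<subseteq> WS V k" "finite V"
  shows "\<exists>s\<in>M.span G. \<forall>g\<in>G. ip V k (w - s) g = 0"
  using assms(1,2)
proof (induction G arbitrary: w rule: finite_induct)
  case empty then show ?case by (meson M.span_zero empty_iff)
next
  case (insert g G)
  obtain s1 where s1: "s1 \<in> M.span G" "\<forall>h\<in>G. ip V k (w - s1) h = 0" using insert.IH[of w] insert.prems by blast
  obtain s2 where s2: "s2 \<in> M.span G" "\<forall>h\<in>G. ip V k (g - s2) h = 0" using insert.IH[of g] insert.prems by blast
  have spm: "M.span G \<subseteq> M.span (insert g G)" by (rule M.span_mono) auto
  have gi: "g \<in> M.span (insert g G)" by (rule M.span_base) simp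
  have s2WS: "s2 \<in> WS V k" using s2(1) M.span_minimal[OF _ WS_subspace] insert.prems by blast
  have g'WS: "g - s2 \<in> WS V k" using insert.prems s2WS by (auto simp: WS_def)
  have r1s2: "ip V k (w - s1) s2 = 0" using ip_span_right[OF s2(1)] s1(2) by blast
  show ?case
  proof (cases "ip V k (g - s2) (g - s2) = 0")
    case True
    then have "g - s2 = 0" using ip_self_zero[OF assms(3) g'WS] by simp
    then have "g = s2" by simp
    have "\<forall>h\<in>insert g G. ip V k (w - s1) h = 0" using s1(2) r1s2 \<open>g = s2\<close> by blast
    moreover have "s1 \<in> M.span (insert g G)" using s1(1) spm by blast
    ultimately show ?thesis by blast
  next
    case False
    define c where "c = ip V k (w - s1) (g - s2) / ip V k (g - s2) (g - s2)"
    define s where "s = s1 + fscale c (g - s2)"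
    have sin: "s \<in> M.span (insert g G)" unfolding s_def
      using s1(1) s2(1) spm gi by (intro M.span_add M.span_scale M.span_diff) auto
    have r: "w - s = (w - s1) - fscale c (g - s2)" by (simp add: s_def algebra_simps)
    have rG: "ip V k (w - s) h = 0" if "h \<in> G" for h
      using s1(2) s2(2) that unfolding r by (simp add: ip_diff_left ip_scale_left)
    have rg': "ip V k (w - s) (g - s2) = 0"
      unfolding r using False by (simp add: ip_diff_left ip_scale_left c_def)
    have rs2: "ip V k (w - s) s2 = 0" using ip_span_right[OF s2(1)] rG by blast
    have "ip V k (w - s) g = ip V k (w - s) (g - s2) + ip V k (w - s) s2"
      by (simp add: ip_diff_right)
    then have "ip V k (w - s) g = 0" using rg' rs2 by simp
    then show ?thesis using sin rG by blast
  qed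
qed

lemma finite_dpl: "finite V \<Longrightarrow> finite {ps. dpl V ps \<and> length ps = h}"
proof -
  assume "finite V"
  then have "finite {ps. set ps \<subseteq> V \<times> V \<and> length ps = h}" by (intro finite_lists_length_eq) auto
  moreover have "set ps \<subseteq> V \<times> V" if "dpl V ps" for ps
    using that by (induction ps arbitrary: V rule: flat.induct) (auto simp: dpl_Cons)
  then have "{ps. dpl V ps \<and> length ps = h} \<subseteq> {ps. set ps \<subseteq> V \<times> V \<and> length ps = h}" by auto
  ultimately show ?thesis by (rule finite_subset[rotated])
qed

lemma finite_Gen: "finite V \<Longrightarrow> finite (Gen V k h)"
proof -
  assume "finite V"
  have "Gen V k h = phi2 V k ` {ps. dpl V ps \<and> length ps = h}" by (auto simp: Gen_def)
  then show ?thesis using finite_dpl[OF \<open>finite V\<close>] by simp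
qed

lemma span_Union_decomp:
  assumes "s \<in> M.span (\<Union>h\<le>k. Gen V k h)"
  shows "\<exists>u. (\<forall>h\<le>k. u h \<in> Sp V k h) \<and> s = (\<Sum>h\<le>k. u h)"
  using assms
proof (induction rule: M.span_induct_alt)
  case base
  show ?case by (intro exI[of _ "\<lambda>_. 0"]) (auto simp: Sp_def span_zero')
next
  case (step c x y)
  then obtain h0 where h0: "h0 \<le> k" "x \<in> Gen V k h0" by auto
  obtain u where u: "\<forall>h\<le>k. u h \<in> Sp V k h" "y = (\<Sum>h\<le>k. u h)" using step by auto
  define u' where "u' = (\<lambda>h. (if h = h0 then fscale c x else 0) + u h)"
  have "u' h \<in> Sp V k h" if "h \<le> k" for h
  proof (cases "h = h0")
    case True
    then have "u' h = fscale c x + u h0" by (simp add: u'_def)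
    moreover have "fscale c x + u h0 \<in> Sp V k h0"
      using M.span_add[OF M.span_scale[OF M.span_base[OF h0(2)]], of "u h0" c] u(1) h0(1)
      unfolding Sp_def by blast
    ultimately show ?thesis using True by simp
  next
    case False
    then have "u' h = u h" by (simp add: u'_def)
    then show ?thesis using u(1) that by simp
  qed
  moreover have "(\<Sum>h\<le>k. u' h) = fscale c x + y"
    unfolding u'_def u(2) sum.distrib using h0 by (simp add: sum.delta)
  ultimately show ?case by (intro exI[of _ u']) simp
qed

lemma decomp:
  assumes "finite V" "2 * k \<le> card V" "w \<in> WS V k"
  shows "\<exists>u. (\<forall>h\<le>k. u h \<in> Sp V k h) \<and> w = (\<Sum>h\<le>k. u h)"
proof -
  let ?G = "\<Union>h\<le>k. Gen V k h"
  have fG: "finite ?G" using finite_Gen[OF assms(1)] by auto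
  have GW: "?G \<subseteq> WS V k" using Gen_WS by auto
  obtain s where s: "s \<in> M.span ?G" "\<forall>g\<in>?G. ip V k (w - s) g = 0"
    using GS[OF fG GW assms(1)] by blast
  have sW: "s \<in> WS V k" using s(1) M.span_minimal[OF GW WS_subspace] by blast
  have "w - s = 0"
  proof (rule complete[OF assms(1,2)])
    show "w - s \<in> WS V k" using sW assms(3) by (auto simp: WS_def)
    fix ps assume "dpl V ps" "length ps \<le> k"
    then have "phi2 V k ps \<in> ?G" by (auto simp: Gen_def)
    then show "ip V k (w - s) (phi2 V k ps) = 0" using s(2) by blast
  qed
  then have "w = s" by simp
  then show ?thesis using span_Union_decomp[OF s(1)] by simp
qed

lemma ip_decomp:
  assumes "finite V" "\<forall>h\<le>k. u h \<in> Sp V k h" "v \<in> Sp V k j" "j \<le> k"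
  shows "ip V k (\<Sum>h\<le>k. u h) v = ip V k (u j) v"
proof -
  have "ip V k (\<Sum>h\<le>k. u h) v = (\<Sum>h\<le>k. ip V k (u h) v)" by (rule ip_sum_left)
  also have "\<dots> = (\<Sum>h\<le>k. if h = j then ip V k (u j) v else 0)"
    using assms by (intro sum.cong) (auto intro: orth_Sp)
  also have "\<dots> = ip V k (u j) v" using assms(4) by (simp add: sum.delta)
  finally show ?thesis .
qed

lemma uniq0:
  assumes "finite V" "\<forall>h\<le>k. u h \<in> Sp V k h" "(\<Sum>h\<le>k. u h) = 0" "j \<le> k"
  shows "u j = 0"
proof -
  have "ip V k (u j) (u j) = 0"
    using ip_decomp[OF assms(1,2) _ assms(4), of "u j"] assms by simp
  then show ?thesis using ip_self_zero[OF assms(1)] Sp_WS assms by blast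
qed


lemma Wv_nonneg: "Wv k V g i \<ge> 0"
proof (induction k V g i rule: Wv.induct)
  case (3 k V w i)
  have "(\<Sum>p\<in>{(a, b). a \<in> V \<and> b \<in> V \<and> a \<noteq> b}.
        Wv k (V - {fst p, snd p}) (\<lambda>e. w (insert (fst p) e) - w (insert (snd p) e)) i) \<ge> 0"
    using 3 by (intro sum_nonneg) auto
  moreover have "real (card V) * (real (card V) - 1) \<ge> 0" by (cases "card V") auto
  ultimately show ?case by simp
qed auto

lemma dpl_in: "dpl V ps \<Longrightarrow> set ps \<subseteq> V \<times> V"
  by (induction ps arbitrary: V rule: flat.induct) (auto simp: dpl_Cons)

lemma card_pset: "dpl V ps \<Longrightarrow> card (pset ps) = 2 * length ps"
  by (simp add: dpl_def distinct_card length_flat)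

lemma card_V_pset: assumes "finite V" "dpl V ps" shows "card (V - pset ps) = card V - 2 * length ps"
proof -
  have "card (pset ps) = 2 * length ps" using card_pset[OF assms(2)] .
  moreover have "pset ps \<subseteq> V" using assms(2) by (simp add: dpl_def)
  ultimately show ?thesis using assms(1) by (simp add: card_Diff_subset finite_subset)
qed

lemma Wv_char:
  assumes "finite V" "2 * k \<le> card V" "i \<le> k"
  shows "Wv k V g i = 0 \<longleftrightarrow> (\<forall>ps. dpl V ps \<and> length ps = i \<longrightarrow> ip V k g (phi2 V k ps) = 0)"
  using assms
proof (induction k arbitrary: V g i)
  case 0
  then have i: "i = 0" by simp
  have "card V choose 0 > 0" by simp
  then show ?case using i by (auto simp: wsum_ip)
next
  case (Suc k)
  show ?case
  proof (cases i)
    case 0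
    have "card V choose Suc k > 0" using Suc.prems by simp
    then show ?thesis using 0 by (auto simp: wsum_ip)
  next
    case (Suc i')
    let ?P = "{(a, b). a \<in> V \<and> b \<in> V \<and> a \<noteq> b}"
    let ?T = "\<lambda>p. Wv k (V - {fst p, snd p}) (\<lambda>e. g (insert (fst p) e) - g (insert (snd p) e)) i'"
    have fP: "finite ?P" by (rule finite_subset[of _ "V \<times> V"]) (auto simp: Suc.prems(1))
    have den: "real (card V) * (real (card V) - 1) > 0" using Suc.prems(2) by simp
    have "Wv (Suc k) V g i = (\<Sum>p\<in>?P. ?T p) / (real (card V) * (real (card V) - 1))"
      using Suc by simp
    then have "Wv (Suc k) V g i = 0 \<longleftrightarrow> (\<Sum>p\<in>?P. ?T p) = 0" using den Suc.prems(2) by simp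
    also have "\<dots> \<longleftrightarrow> (\<forall>p\<in>?P. ?T p = 0)" using fP by (intro sum_nonneg_eq_0_iff) (auto simp: Wv_nonneg)
    also have "\<dots> \<longleftrightarrow> (\<forall>a b qs. a \<in> V \<and> b \<in> V \<and> a \<noteq> b \<and> dpl (V - {a,b}) qs \<and> length qs = i' \<longrightarrow>
        ip V (Suc k) g (phi2 V (Suc k) ((a,b)#qs)) = 0)"
    proof -
      have "?T (a,b) = 0 \<longleftrightarrow> (\<forall>qs. dpl (V - {a,b}) qs \<and> length qs = i' \<longrightarrow>
        ip V (Suc k) g (phi2 V (Suc k) ((a,b)#qs)) = 0)" if ab: "a \<in> V" "b \<in> V" "a \<noteq> b" for a b
      proof -
        have "?T (a,b) = 0 \<longleftrightarrow> (\<forall>qs. dpl (V - {a,b}) qs \<and> length qs = i' \<longrightarrow>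
           ip (V - {a,b}) k (\<lambda>e. g (insert a e) - g (insert b e)) (phi2 (V - {a,b}) k qs) = 0)"
          using Suc.IH[of "V - {a,b}" i'] Suc.prems ab \<open>i = Suc i'\<close> by (simp add: card_Diff_subset)
        moreover have "ip (V - {a,b}) k (\<lambda>e. g (insert a e) - g (insert b e)) (phi2 (V - {a,b}) k qs)
          = ip V (Suc k) g (phi2 V (Suc k) ((a,b)#qs))" if "dpl (V - {a,b}) qs" for qs
        proof -
          have "ip (V - {a,b}) k (\<lambda>e. g (insert a e) - g (insert b e)) (phi2 (V - {a,b}) k qs)
            = ip (V - {a,b}) k (dif a b g) (phi2 (V - {a,b}) k qs)"
          proof (rule ip_cong)
            fix e assume "e \<in> ksub (V - {a, b}) k"
            then have "e - {b} = e" "e - {a} = e" by (auto simp: ksub_def)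
            then show "g (insert a e) - g (insert b e) = dif a b g e" by (simp add: dif_def)
          qed simp
          also have "\<dots> = ip V (Suc k) g (phi2 V (Suc k) ((a,b)#qs))"
            using that ab Suc.prems(1) by (intro adj1[symmetric]) (auto simp: dpl_Cons dpl_def)
          finally show ?thesis .
        qed
        ultimately show ?thesis by auto
      qed
      then show ?thesis by auto
    qed
    also have "\<dots> \<longleftrightarrow> (\<forall>ps. dpl V ps \<and> length ps = i \<longrightarrow> ip V (Suc k) g (phi2 V (Suc k) ps) = 0)"
    proof
      assume H: "\<forall>a b qs. a \<in> V \<and> b \<in> V \<and> a \<noteq> b \<and> dpl (V - {a,b}) qs \<and> length qs = i' \<longrightarrow>
        ip V (Suc k) g (phi2 V (Suc k) ((a,b)#qs)) = 0"
      show "\<forall>ps. dpl V ps \<and> length ps = i \<longrightarrow> ip V (Suc k) g (phi2 V (Suc k) ps) = 0"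
      proof (intro allI impI)
        fix ps assume ps: "dpl V ps \<and> length ps = i"
        then obtain a b qs where "ps = (a,b)#qs" using \<open>i = Suc i'\<close> by (cases ps) auto
        then show "ip V (Suc k) g (phi2 V (Suc k) ps) = 0" using H ps \<open>i = Suc i'\<close> by (auto simp: dpl_Cons)
      qed
    next
      assume H: "\<forall>ps. dpl V ps \<and> length ps = i \<longrightarrow> ip V (Suc k) g (phi2 V (Suc k) ps) = 0"
      show "\<forall>a b qs. a \<in> V \<and> b \<in> V \<and> a \<noteq> b \<and> dpl (V - {a,b}) qs \<and> length qs = i' \<longrightarrow>
        ip V (Suc k) g (phi2 V (Suc k) ((a,b)#qs)) = 0"
      proof (intro allI impI)
        fix a b qs assume q: "a \<in> V \<and> b \<in> V \<and> a \<noteq> b \<and> dpl (V - {a,b}) qs \<and> length qs = i'"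
        then have "dpl V ((a,b)#qs)" by (auto simp: dpl_Cons dpl_def)
        then show "ip V (Suc k) g (phi2 V (Suc k) ((a,b)#qs)) = 0" using H q \<open>i = Suc i'\<close> by auto
      qed
    qed
    finally show ?thesis .
  qed
qed

definition Qop :: "'a \<Rightarrow> 'a \<Rightarrow> 'a weighting \<Rightarrow> 'a weighting" where
  "Qop a b z = z - wperm (Transposition.transpose a b) z"

fun Gop :: "('a \<times> 'a) list \<Rightarrow> 'a weighting \<Rightarrow> 'a weighting" where
  "Gop [] z = z"
| "Gop ((a,b)#ps) z = Gop ps (Qop a b z)"

lemma wperm_transpose: "wperm (Transposition.transpose a b) z = (\<lambda>e. z (Transposition.transpose a b ` e))"
  by (simp add: wperm_def)

lemma Qop_add: "Qop a b (f + g) = Qop a b f + Qop a b g" by (simp add: Qop_def wperm_add)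
lemma Qop_diff: "Qop a b (f - g) = Qop a b f - Qop a b g" by (simp add: Qop_def wperm_diff)
lemma Gop_add: "Gop ps (f + g) = Gop ps f + Gop ps g"
  by (induction ps arbitrary: f g rule: flat.induct) (auto simp: Qop_add)
lemma Gop_diff: "Gop ps (f - g) = Gop ps f - Gop ps g"
  by (induction ps arbitrary: f g rule: flat.induct) (auto simp: Qop_diff)
lemma Qop_zero: "Qop a b 0 = 0" unfolding Qop_def wperm_zero by simp
lemma Gop_zero: "Gop ps 0 = 0"
  by (induction ps rule: flat.induct) (simp_all only: Gop.simps Qop_zero)
lemma Gop_sum: "Gop ps (\<Sum>h\<in>A. f h) = (\<Sum>h\<in>A. Gop ps (f h))"
proof (induction A rule: infinite_finite_induct)
  case (infinite A) then show ?case by (metis sum.infinite Gop_zero)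
next
  case empty then show ?case by (simp only: sum.empty Gop_zero)
next
  case (insert x F) then show ?case by (simp only: sum.insert[OF insert.hyps(1,2)] Gop_add insert.IH)
qed

lemma Gop_Sp:
  assumes "set ps \<subseteq> V \<times> V" "u \<in> Sp V k h" shows "Gop ps u \<in> Sp V k h"
  using assms
proof (induction ps arbitrary: u rule: flat.induct)
  case 1 then show ?case by simp
next
  case (2 a b ps)
  have "Transposition.transpose a b permutes V" using 2(2) by (intro permutes_swap_id) auto
  then have "Qop a b u \<in> Sp V k h" unfolding Qop_def using 2(3) Sp_wperm
    by (metis M.subspace_diff Sp_subspace)
  then show ?case using 2 by simp
qed

lemma ind_transpose: "a \<noteq> c \<Longrightarrow> a \<noteq> d \<Longrightarrow> ind a (Transposition.transpose c d ` e) = ind a e"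
  by (simp add: ind_def in_transpose_image_iff)

lemma Qop_lift:
  assumes "a \<noteq> c" "a \<noteq> d" "b \<noteq> c" "b \<noteq> d"
  shows "Qop c d (lift a b g) = lift a b (Qop c d g)"
proof -
  let ?t = "Transposition.transpose c d"
  have "?t ` e - {a,b} = ?t ` (e - {a,b})" for e
  proof -
    have "?t ` (e - {a,b}) = ?t ` e - ?t ` {a,b}" by (rule image_set_diff) simp
    also have "?t ` {a,b} = {a,b}" using assms by simp
    finally show ?thesis by simp
  qed
  then show ?thesis using assms
    by (simp add: Qop_def wperm_transpose lift_def fun_eq_iff ind_transpose algebra_simps)
qed

lemma Gop_lift:
  assumes "a \<notin> pset ps" "b \<notin> pset ps"
  shows "Gop ps (lift a b g) = lift a b (Gop ps g)"
  using assms
proof (induction ps arbitrary: g rule: flat.induct)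
  case 1 then show ?case by simp
next
  case (2 c d ps)
  then have "Qop c d (lift a b g) = lift a b (Qop c d g)" by (intro Qop_lift) auto
  then show ?case using 2 by simp
qed

lemma transpose_image_set1:
  assumes "a \<noteq> b" "a \<in> A" "b \<notin> A"
  shows "Transposition.transpose a b ` A = insert b (A - {a})"
  using assms by (intro set_eqI) (auto simp: in_transpose_image_iff Transposition.transpose_def split: if_splits)
lemma transpose_image_set2:
  assumes "a \<noteq> b" "b \<in> A" "a \<notin> A"
  shows "Transposition.transpose a b ` A = insert a (A - {b})"
  using assms by (intro set_eqI) (auto simp: in_transpose_image_iff Transposition.transpose_def split: if_splits)

lemma Qop_lift_dif:
  assumes "a \<noteq> b" shows "Qop a b z = lift a b (dif a b z)"
proof (rule ext)
  fix A
  show "Qop a b z A = lift a b (dif a b z) A"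
  proof (cases "a \<in> A")
    case True
    show ?thesis
    proof (cases "b \<in> A")
      case True
      then show ?thesis using \<open>a \<in> A\<close> assms by (simp add: Qop_def wperm_transpose lift_def ind_def)
    next
      case False
      have "insert a (A - {a, b} - {b}) = A" "insert b (A - {a, b} - {a}) = insert b (A - {a})"
        using \<open>a \<in> A\<close> False by auto
      then show ?thesis using \<open>a \<in> A\<close> False assms
        by (simp add: Qop_def wperm_transpose lift_def ind_def dif_def transpose_image_set1)
    qed
  next
    case False
    show ?thesis
    proof (cases "b \<in> A")
      case True
      have "insert a (A - {a, b} - {b}) = insert a (A - {b})" "insert b (A - {a, b} - {a}) = A"
        using \<open>a \<notin> A\<close> True by auto
      then show ?thesis using \<open>a \<notin> A\<close> True assms
        by (simp add: Qop_def wperm_transpose lift_def ind_def dif_def transpose_image_set2)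
    next
      case False
      then show ?thesis using \<open>a \<notin> A\<close> assms by (simp add: Qop_def wperm_transpose lift_def ind_def)
    qed
  qed
qed

lemma Gop_ip:
  assumes "finite V" "dpl V ps" "length ps \<le> k"
  shows "ip V k (Gop ps x) y = ip (V - pset ps) (k - length ps) (Dd ps x) (Dd ps y)"
  using assms
proof (induction ps arbitrary: V k x y rule: flat.induct)
  case 1 then show ?case by simp
next
  case (2 a b ps)
  then obtain k' where k: "k = Suc k'" by (cases k) auto
  have d: "a \<noteq> b" "a \<notin> pset ps" "b \<notin> pset ps" "a \<in> V" "b \<in> V" "dpl (V - {a,b}) ps"
    using 2(3) by (auto simp: dpl_Cons)
  have "Gop ((a,b)#ps) x = lift a b (Gop ps (dif a b x))"
    using d by (simp add: Qop_lift_dif Gop_lift)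
  then have "ip V k (Gop ((a,b)#ps) x) y = ip V (Suc k') y (lift a b (Gop ps (dif a b x)))"
    using k by (simp add: ip_comm)
  also have "\<dots> = ip (V - {a,b}) k' (dif a b y) (Gop ps (dif a b x))"
    using d 2(2) by (intro adj_lift) auto
  also have "\<dots> = ip (V - {a,b}) k' (Gop ps (dif a b x)) (dif a b y)" by (simp add: ip_comm)
  also have "\<dots> = ip (V - {a,b} - pset ps) (k' - length ps) (Dd ps (dif a b x)) (Dd ps (dif a b y))"
    using 2(1)[OF _ d(6)] 2(2,4) k by simp
  also have "V - {a,b} - pset ps = V - pset ((a,b)#ps)" by auto
  finally show ?case using k by simp
qed

lemma Gop_perm_const:
  assumes "set ps \<subseteq> V \<times> V" "\<And>\<pi>. \<pi> permutes V \<Longrightarrow> ip V k (wperm \<pi> x) y = C" "\<pi> permutes V"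
  shows "ip V k (Gop ps (wperm \<pi> x)) y = (if ps = [] then C else 0)"
  using assms(1,3)
proof (induction ps arbitrary: \<pi> rule: flat.induct)
  case 1 then show ?case using assms(2) by simp
next
  case (2 a b ps)
  let ?t = "Transposition.transpose a b"
  have t: "?t permutes V" using 2(2) by (intro permutes_swap_id) auto
  have "Gop ((a,b)#ps) (wperm \<pi> x) = Gop ps (wperm \<pi> x) - Gop ps (wperm (?t \<circ> \<pi>) x)"
    using wperm_comp[OF t 2(3)] by (simp add: Qop_def Gop_diff)
  then have "ip V k (Gop ((a,b)#ps) (wperm \<pi> x)) y
     = ip V k (Gop ps (wperm \<pi> x)) y - ip V k (Gop ps (wperm (?t \<circ> \<pi>) x)) y"
    by (simp only: ip_diff_left)
  moreover have "?t \<circ> \<pi> permutes V" using t 2(3) by (rule permutes_compose[rotated])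
  ultimately show ?case using 2 by simp
qed


lemma phi2_Sp: "dpl V ps \<Longrightarrow> phi2 V k ps \<in> Sp V k (length ps)"
  unfolding Sp_def by (rule M.span_base) (auto simp: Gen_def)

lemma Dd_low:
  assumes "finite V" "2 * k \<le> card V" "dpl V ps" "length ps \<le> k" "x \<in> Sp V k h" "h < length ps"
    "e \<in> ksub (V - pset ps) (k - length ps)"
  shows "Dd ps x e = 0"
proof -
  let ?V = "V - pset ps" and ?k = "k - length ps"
  define g where "g = (\<lambda>e. if e \<in> ksub ?V ?k then Dd ps x e else 0)"
  have "g = 0"
  proof (rule complete)
    show "finite ?V" using assms(1) by simp
    show "2 * ?k \<le> card ?V" using card_V_pset[OF assms(1,3)] assms(2) by simp
    show "g \<in> WS ?V ?k" by (simp add: g_def WS_def)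
    fix qs assume qs: "dpl ?V qs" "length qs \<le> ?k"
    have "ip ?V ?k g (phi2 ?V ?k qs) = ip ?V ?k (Dd ps x) (phi2 ?V ?k qs)"
      by (rule ip_cong) (auto simp: g_def)
    also have "\<dots> = ip V k x (phi2 V k (ps @ qs))"
      using assms(1,3,4) qs by (intro adjD[symmetric]) (auto simp: dpl_append)
    also have "\<dots> = 0"
    proof (rule orth_Sp[OF assms(1,5)])
      show "phi2 V k (ps @ qs) \<in> Sp V k (length (ps @ qs))" using qs assms(3) by (intro phi2_Sp) (simp add: dpl_append)
      show "h \<noteq> length (ps @ qs)" "h \<le> k" "length (ps @ qs) \<le> k" using assms(4,6) qs by auto
    qed
    finally show "ip ?V ?k g (phi2 ?V ?k qs) = 0" .
  qed
  then show ?thesis using assms(7) by (metis g_def zero_fun_apply)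
qed

lemma Gop_low:
  assumes "finite V" "2 * k \<le> card V" "dpl V ps" "length ps \<le> k" "x \<in> Sp V k h" "h < length ps"
  shows "ip V k (Gop ps x) y = 0"
proof -
  have "ip V k (Gop ps x) y = ip (V - pset ps) (k - length ps) (Dd ps x) (Dd ps y)"
    using assms by (intro Gop_ip) auto
  also have "\<dots> = ip (V - pset ps) (k - length ps) 0 (Dd ps y)"
    using Dd_low[OF assms] by (intro ip_cong) auto
  finally show ?thesis by (simp add: ip_def)
qed

lemma ip_phi2_Nil: "finite V \<Longrightarrow> ip V k (phi2 V k []) (phi2 V k []) = real (card V choose k)"
  by (simp add: ip_def phi2_def card_ksub)

lemma Dd_top:
  assumes "finite V" "2 * k \<le> card V" "dpl V ps" "length ps \<le> k" "x \<in> Sp V k (length ps)"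
    "e \<in> ksub (V - pset ps) (k - length ps)"
  shows "Dd ps x e = ip V k x (phi2 V k ps) / real (card (V - pset ps) choose (k - length ps))"
proof -
  let ?V = "V - pset ps" and ?k = "k - length ps"
  let ?B = "real (card ?V choose ?k)"
  have Bpos: "?B > 0" using card_V_pset[OF assms(1,3)] assms(2,4) by simp
  define c where "c = ip V k x (phi2 V k ps) / ?B"
  define g where "g = (\<lambda>e. if e \<in> ksub ?V ?k then Dd ps x e - c else 0)"
  have fV: "finite ?V" using assms(1) by simp
  have "g = 0"
  proof (rule complete)
    show "finite ?V" by fact
    show "2 * ?k \<le> card ?V" using card_V_pset[OF assms(1,3)] assms(2) by simp
    show "g \<in> WS ?V ?k" by (simp add: g_def WS_def)
    fix qs assume qs: "dpl ?V qs" "length qs \<le> ?k"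
    have "ip ?V ?k g (phi2 ?V ?k qs) = ip ?V ?k (Dd ps x - fscale c (phi2 ?V ?k [])) (phi2 ?V ?k qs)"
      by (rule ip_cong) (auto simp: g_def phi2_def)
    also have "\<dots> = ip ?V ?k (Dd ps x) (phi2 ?V ?k qs) - c * ip ?V ?k (phi2 ?V ?k []) (phi2 ?V ?k qs)"
      by (simp add: ip_diff_left ip_scale_left)
    also have "ip ?V ?k (Dd ps x) (phi2 ?V ?k qs) = ip V k x (phi2 V k (ps @ qs))"
      using assms(1,3,4) qs by (intro adjD[symmetric]) (auto simp: dpl_append)
    finally have eq: "ip ?V ?k g (phi2 ?V ?k qs) = ip V k x (phi2 V k (ps @ qs)) - c * ip ?V ?k (phi2 ?V ?k []) (phi2 ?V ?k qs)" .
    show "ip ?V ?k g (phi2 ?V ?k qs) = 0"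
    proof (cases "qs = []")
      case True
      then show ?thesis using eq ip_phi2_Nil[OF fV, of ?k] Bpos by (simp add: c_def)
    next
      case False
      have "ip V k x (phi2 V k (ps @ qs)) = 0"
      proof (rule orth_Sp[OF assms(1,5)])
        show "phi2 V k (ps @ qs) \<in> Sp V k (length (ps @ qs))" using qs assms(3) by (intro phi2_Sp) (simp add: dpl_append)
        show "length ps \<noteq> length (ps @ qs)" "length ps \<le> k" "length (ps @ qs) \<le> k" using assms(4) qs False by auto
      qed
      moreover have "ip ?V ?k (phi2 ?V ?k []) (phi2 ?V ?k qs) = 0"
        using qs False by (intro orth_phi2[OF fV]) auto
      ultimately show ?thesis using eq by simp
    qed
  qed
  then have "g e = 0" by simp
  then show ?thesis using assms(6) by (simp add: g_def c_def)
qed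

lemma Gop_top:
  assumes "finite V" "2 * k \<le> card V" "dpl V ps" "length ps \<le> k"
    "x \<in> Sp V k (length ps)" "y \<in> Sp V k (length ps)"
  shows "ip V k (Gop ps x) y = ip V k x (phi2 V k ps) * ip V k y (phi2 V k ps)
     / real (card (V - pset ps) choose (k - length ps))"
proof -
  let ?V = "V - pset ps" and ?k = "k - length ps"
  let ?B = "real (card ?V choose ?k)"
  have Bpos: "?B > 0" using card_V_pset[OF assms(1,3)] assms(2,4) by simp
  have "ip V k (Gop ps x) y = ip ?V ?k (Dd ps x) (Dd ps y)"
    using assms by (intro Gop_ip) auto
  also have "\<dots> = (\<Sum>e\<in>ksub ?V ?k. (ip V k x (phi2 V k ps) / ?B) * (ip V k y (phi2 V k ps) / ?B))"
    unfolding ip_def[of ?V ?k] using Dd_top[OF assms(1-5)] Dd_top[OF assms(1-4,6)] by (intro sum.cong) auto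
  also have "\<dots> = ?B * ((ip V k x (phi2 V k ps) / ?B) * (ip V k y (phi2 V k ps) / ?B))"
    using assms(1) by (simp add: card_ksub)
  also have "\<dots> = ip V k x (phi2 V k ps) * ip V k y (phi2 V k ps) / ?B"
    using Bpos by (simp add: field_simps power2_eq_square)
  finally show ?thesis .
qed

lemma max0:
  assumes "finite P" "P \<noteq> {}" "\<And>p. f p \<ge> (0::real)"
  shows "Max (f ` P) = 0 \<longleftrightarrow> (\<forall>p\<in>P. f p = 0)"
proof
  assume M: "Max (f ` P) = 0"
  show "\<forall>p\<in>P. f p = 0"
  proof
    fix p assume "p \<in> P"
    then have "f p \<le> Max (f ` P)" using assms(1) by (intro Max_ge) auto
    then show "f p = 0" using M assms(3)[of p] by simp
  qed
next
  assume "\<forall>p\<in>P. f p = 0"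
  then have "f ` P = {0}" using assms(2) by auto
  then show "Max (f ` P) = 0" by simp
qed

lemma perms_fin_ne: "finite V \<Longrightarrow> finite {\<pi>. \<pi> permutes V} \<and> {\<pi>. \<pi> permutes V} \<noteq> {}"
  using finite_permutations permutes_id by blast

lemma sp_eq_zero:
  assumes "finite V" "u \<in> Sp V k h" "\<And>ps. dpl V ps \<Longrightarrow> length ps = h \<Longrightarrow> ip V k u (phi2 V k ps) = 0"
  shows "u = 0"
proof -
  have "ip V k u u = 0" using assms(2) unfolding Sp_def
    by (rule ip_span_right) (use assms(3) in \<open>auto simp: Gen_def\<close>)
  then show ?thesis using ip_self_zero[OF assms(1)] Sp_WS assms(2) by blast
qed


definition std :: "(nat \<Rightarrow> 'a) \<Rightarrow> (nat \<Rightarrow> 'a) \<Rightarrow> nat \<Rightarrow> ('a \<times> 'a) list" where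
  "std x y i = map (\<lambda>j. (x j, y j)) [1..<Suc i]"

lemma std_0[simp]: "std x y 0 = []" by (simp add: std_def)
lemma std_Suc: "std x y (Suc i) = std x y i @ [(x (Suc i), y (Suc i))]"
  by (simp add: std_def)
lemma length_std[simp]: "length (std x y i) = i" by (simp add: std_def)

lemma psi_append: "psi (ps @ qs) A = psi ps A * psi qs A"
  by (induction ps rule: flat.induct) auto

lemma pset_std: "pset (std x y i) = x ` {1..i} \<union> y ` {1..i}"
  by (induction i) (auto simp: std_Suc flat_append atLeastAtMostSuc_conv)

locale S6 =
  fixes V :: "'a set" and n k :: nat and x y :: "nat \<Rightarrow> 'a"
  assumes finV: "finite V" and cardV: "card V = n" and k1: "1 \<le> k" and k2: "2 * k \<le> n"
    and xV: "x ` {1..k} \<subseteq> V" and yV: "y ` {1..k} \<subseteq> V"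
    and injx: "inj_on x {1..k}" and injy: "inj_on y {1..k}"
    and disj: "x ` {1..k} \<inter> y ` {1..k} = {}"
begin

lemma card2: "2 * k \<le> card V" using cardV k2 by simp

lemma new_x: assumes "Suc i \<le> k" shows "x (Suc i) \<notin> x ` {1..i}"
proof
  assume a: "x (Suc i) \<in> x ` {1..i}"
  then obtain j where j: "j \<in> {1..i}" "x (Suc i) = x j" by blast
  have "j \<in> {1..k}" "Suc i \<in> {1..k}" using j(1) assms by auto
  then have "Suc i = j" using inj_onD[OF injx j(2)] by blast
  with j(1) show False by simp
qed

lemma new_y: assumes "Suc i \<le> k" shows "y (Suc i) \<notin> y ` {1..i}"
proof
  assume a: "y (Suc i) \<in> y ` {1..i}"
  then obtain j where j: "j \<in> {1..i}" "y (Suc i) = y j" by blast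
  have "j \<in> {1..k}" "Suc i \<in> {1..k}" using j(1) assms by auto
  then have "Suc i = j" using inj_onD[OF injy j(2)] by blast
  with j(1) show False by simp
qed

lemma new_xy: assumes "Suc i \<le> k"
  shows "x (Suc i) \<notin> y ` {1..i}" "y (Suc i) \<notin> x ` {1..i}" "x (Suc i) \<noteq> y (Suc i)"
proof -
  have m: "x (Suc i) \<in> x ` {1..k}" "y (Suc i) \<in> y ` {1..k}" using assms by auto
  have s: "y ` {1..i} \<subseteq> y ` {1..k}" "x ` {1..i} \<subseteq> x ` {1..k}" using assms by (auto intro: image_mono)
  have D: "\<And>z. z \<in> x ` {1..k} \<Longrightarrow> z \<in> y ` {1..k} \<Longrightarrow> False" using disj by blast
  show "x (Suc i) \<notin> y ` {1..i}" using D m(1) s(1) by blast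
  show "y (Suc i) \<notin> x ` {1..i}" using D m(2) s(2) by blast
  show "x (Suc i) \<noteq> y (Suc i)" using D m by metis
qed

lemma dpl_std: "i \<le> k \<Longrightarrow> dpl V (std x y i)"
proof (induction i)
  case 0 then show ?case by simp
next
  case (Suc i)
  have xi: "x (Suc i) \<notin> x ` {1..i}" using new_x Suc.prems .
  have yi: "y (Suc i) \<notin> y ` {1..i}" using new_y Suc.prems .
  have xy1: "x (Suc i) \<notin> y ` {1..i}" "y (Suc i) \<notin> x ` {1..i}" "x (Suc i) \<noteq> y (Suc i)"
    using new_xy Suc.prems by auto
  have inV: "x (Suc i) \<in> V" "y (Suc i) \<in> V" using xV yV Suc.prems by auto
  have "dpl (V - pset (std x y i)) [(x (Suc i), y (Suc i))]"
    using xi yi xy1 inV by (auto simp: dpl_Cons pset_std)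
  then show ?case using Suc by (simp add: std_Suc dpl_append)
qed

lemma phi_aux:
  assumes "i \<le> k"
  shows "(if (\<forall>j\<in>{1..i}. card (A \<inter> {x j, y j}) = 1) then (-1::real) ^ card (A \<inter> y ` {1..i}) else 0)
     = psi (std x y i) A"
  using assms
proof (induction i)
  case 0 then show ?case by simp
next
  case (Suc i)
  let ?a = "x (Suc i)" and ?b = "y (Suc i)"
  have ab: "?a \<noteq> ?b" using new_xy Suc.prems by auto
  have yi: "?b \<notin> y ` {1..i}" using new_y Suc.prems .
  have all: "(\<forall>j\<in>{1..Suc i}. card (A \<inter> {x j, y j}) = 1) \<longleftrightarrow>
     (\<forall>j\<in>{1..i}. card (A \<inter> {x j, y j}) = 1) \<and> card (A \<inter> {?a, ?b}) = 1"
    by (auto simp: atLeastAtMostSuc_conv)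
  have cnt: "card (A \<inter> y ` {1..Suc i}) = card (A \<inter> y ` {1..i}) + (if ?b \<in> A then 1 else 0)"
  proof -
    have "y ` {1..Suc i} = insert ?b (y ` {1..i})" by (auto simp: atLeastAtMostSuc_conv)
    then show ?thesis using yi by (auto simp: Int_insert_right)
  qed
  have IH: "(if (\<forall>j\<in>{1..i}. card (A \<inter> {x j, y j}) = 1) then (-1::real) ^ card (A \<inter> y ` {1..i}) else 0)
     = psi (std x y i) A" using Suc by simp
  have R: "psi (std x y (Suc i)) A = psi (std x y i) A * (ind ?a A - ind ?b A)"
    by (simp add: std_Suc psi_append)
  show ?case
  proof (cases "\<forall>j\<in>{1..i}. card (A \<inter> {x j, y j}) = 1")
    case False
    have p0: "psi (std x y i) A = 0" using IH False by metis
    have c0: "\<not> (\<forall>j\<in>{1..Suc i}. card (A \<inter> {x j, y j}) = 1)" using False all by simp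
    show ?thesis using p0 c0 R by simp
  next
    case True
    then have IH': "psi (std x y i) A = (-1) ^ card (A \<inter> y ` {1..i})" using IH by simp
    consider (a) "?a \<in> A" "?b \<notin> A" | (b) "?b \<in> A" "?a \<notin> A" | (c) "?a \<in> A" "?b \<in> A" | (d) "?a \<notin> A" "?b \<notin> A"
      by blast
    then show ?thesis
    proof cases
      case a
      then have "A \<inter> {?a, ?b} = {?a}" by auto
      then show ?thesis using True all R IH' cnt a by (simp add: ind_def)
    next
      case b
      then have "A \<inter> {?a, ?b} = {?b}" by auto
      then show ?thesis using True all R IH' cnt b by (simp add: ind_def)
    next
      case c
      then have "A \<inter> {?a, ?b} = {?a, ?b}" by auto
      then show ?thesis using True all R IH' cnt c ab by (simp add: ind_def)
    next
      case d
      then have "A \<inter> {?a, ?b} = {}" by auto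
      then show ?thesis using True all R IH' cnt d by (simp add: ind_def)
    qed
  qed
qed

lemma phi_std: "i \<le> k \<Longrightarrow> phi V k x y i = phi2 V k (std x y i)"
  unfolding phi_def phi2_def using phi_aux by (auto simp: fun_eq_iff)

lemma orbit_Gen: "i \<le> k \<Longrightarrow> {wperm \<pi> (phi V k x y i) | \<pi>. \<pi> permutes V} = Gen V k i"
proof
  assume i: "i \<le> k"
  show "{wperm \<pi> (phi V k x y i) | \<pi>. \<pi> permutes V} \<subseteq> Gen V k i"
    using i dpl_std[OF i] by (auto simp: phi_std wperm_phi2 Gen_def intro!: dpl_map)
  show "Gen V k i \<subseteq> {wperm \<pi> (phi V k x y i) | \<pi>. \<pi> permutes V}"
  proof
    fix g assume "g \<in> Gen V k i"
    then obtain ps where ps: "g = phi2 V k ps" "dpl V ps" "length ps = i" by (auto simp: Gen_def)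
    obtain \<pi> where \<pi>: "\<pi> permutes V" "map (map_prod \<pi> \<pi>) (std x y i) = ps"
      using exists_perm_dpl[OF dpl_std[OF i] ps(2)] ps(3) by auto
    then have "g = wperm \<pi> (phi V k x y i)" using ps(1) i by (simp add: phi_std wperm_phi2)
    then show "g \<in> {wperm \<pi> (phi V k x y i) | \<pi>. \<pi> permutes V}" using \<pi>(1) by blast
  qed
qed

lemma Vsp_eq: "i \<le> k \<Longrightarrow> Vsp V k x y i = Sp V k i"
  by (simp add: Vsp_def orbit_Gen wspan_def Sp_def)

lemma phi_Sp: "i \<le> k \<Longrightarrow> phi V k x y i \<in> Sp V k i"
  using phi_std phi2_Sp dpl_std by fastforce

lemma wsum_Sp0: "h \<le> k \<Longrightarrow> 1 \<le> h \<Longrightarrow> u \<in> Sp V k h \<Longrightarrow> wsum V k u = 0"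
  unfolding wsum_ip using orth_Sp[OF finV _ phi2_Sp[of V "[]" k], of u h] by auto

end


context S6 begin

abbreviation "P \<equiv> {\<pi>. \<pi> permutes V}"

lemma partA:
  assumes "i \<in> {1..k}" "w \<in> WS V k"
  shows "disc V k w (phi V k x y i) = 0 \<longleftrightarrow> w \<in> orth V k (Vsp V k x y i)"
proof -
  have ik: "i \<le> k" "1 \<le> i" using assms(1) by auto
  let ?f = "phi V k x y i"
  have dphi: "dens V k ?f = 0" unfolding dens_def using wsum_Sp0[OF ik phi_Sp[OF ik(1)]] by simp
  have "disc V k w ?f = Max ((\<lambda>\<pi>. \<bar>ip V k (wperm \<pi> w) ?f\<bar>) ` P)"
    unfolding disc_def dphi by simp
  then have "disc V k w ?f = 0 \<longleftrightarrow> (\<forall>\<pi>\<in>P. \<bar>ip V k (wperm \<pi> w) ?f\<bar> = 0)"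
    using max0[of P "\<lambda>\<pi>. \<bar>ip V k (wperm \<pi> w) ?f\<bar>"] perms_fin_ne[OF finV] by simp
  also have "\<dots> \<longleftrightarrow> (\<forall>\<pi>\<in>P. ip V k w (wperm (inv \<pi>) ?f) = 0)"
  proof -
    have "ip V k (wperm \<pi> w) ?f = ip V k w (wperm (inv \<pi>) ?f)" if "\<pi> \<in> P" for \<pi>
      using that by (simp add: wperm_ip)
    then show ?thesis by auto
  qed
  also have "\<dots> \<longleftrightarrow> (\<forall>g\<in>Gen V k i. ip V k w g = 0)"
  proof
    assume H: "\<forall>\<pi>\<in>P. ip V k w (wperm (inv \<pi>) ?f) = 0"
    show "\<forall>g\<in>Gen V k i. ip V k w g = 0"
    proof
      fix g assume "g \<in> Gen V k i"
      then obtain \<sigma> where \<sigma>: "\<sigma> permutes V" "g = wperm \<sigma> ?f" using orbit_Gen[OF ik(1)] by blast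
      have "inv \<sigma> \<in> P" using permutes_inv[OF \<sigma>(1)] by simp
      then have "ip V k w (wperm (inv (inv \<sigma>)) ?f) = 0" using H by blast
      then show "ip V k w g = 0" using \<sigma>(2) permutes_inv_inv[OF \<sigma>(1)] by simp
    qed
  next
    assume H: "\<forall>g\<in>Gen V k i. ip V k w g = 0"
    show "\<forall>\<pi>\<in>P. ip V k w (wperm (inv \<pi>) ?f) = 0"
    proof
      fix \<pi> assume "\<pi> \<in> P"
      then have "wperm (inv \<pi>) ?f \<in> Gen V k i" using orbit_Gen[OF ik(1)] permutes_inv by blast
      then show "ip V k w (wperm (inv \<pi>) ?f) = 0" using H by blast
    qed
  qed
  also have "\<dots> \<longleftrightarrow> (\<forall>u\<in>Sp V k i. ip V k w u = 0)"
  proof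
    assume "\<forall>g\<in>Gen V k i. ip V k w g = 0"
    then show "\<forall>u\<in>Sp V k i. ip V k w u = 0" unfolding Sp_def using ip_span_right by blast
  next
    assume "\<forall>u\<in>Sp V k i. ip V k w u = 0"
    then show "\<forall>g\<in>Gen V k i. ip V k w g = 0" unfolding Sp_def using M.span_base by blast
  qed
  also have "\<dots> \<longleftrightarrow> w \<in> orth V k (Vsp V k x y i)"
    using assms(2) ik by (simp add: orth_def Vsp_eq)
  finally show ?thesis .
qed

lemma partB:
  assumes "i \<le> k" "j \<le> k" "i \<noteq> j" "u \<in> Vsp V k x y i" "w \<in> Vsp V k x y j"
  shows "disc V k u w = 0"
proof -
  have u: "u \<in> Sp V k i" and w: "w \<in> Sp V k j" using assms Vsp_eq by auto
  have d: "dens V k u * dens V k w = 0"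
  proof (cases "i = 0")
    case True
    then have "wsum V k w = 0" using wsum_Sp0[OF assms(2) _ w] assms(3) by simp
    then show ?thesis by (simp add: dens_def)
  next
    case False
    then have "wsum V k u = 0" using wsum_Sp0[OF assms(1) _ u] by simp
    then show ?thesis by (simp add: dens_def)
  qed
  have "\<forall>\<pi>\<in>P. \<bar>ip V k (wperm \<pi> u) w - dens V k u * dens V k w * real (card V choose k)\<bar> = 0"
  proof
    fix \<pi> assume "\<pi> \<in> P"
    then have "wperm \<pi> u \<in> Sp V k i" using Sp_wperm u by blast
    then have "ip V k (wperm \<pi> u) w = 0" using orth_Sp[OF finV _ w assms(3,1,2)] by blast
    then show "\<bar>ip V k (wperm \<pi> u) w - dens V k u * dens V k w * real (card V choose k)\<bar> = 0"
      using d by simp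
  qed
  then show ?thesis unfolding disc_def
    using iffD2[OF max0[of P "\<lambda>\<pi>. \<bar>ip V k (wperm \<pi> u) w - dens V k u * dens V k w * real (card V choose k)\<bar>"]]
      perms_fin_ne[OF finV] by simp
qed

lemma partC:
  assumes "w \<in> WS V k"
  shows "\<exists>!u::nat \<Rightarrow> 'a weighting.
        (\<forall>i\<le>k. u i \<in> Vsp V k x y i) \<and> (\<forall>i>k. u i = 0) \<and> w = (\<Sum>i\<le>k. u i)"
proof -
  obtain u where u: "\<forall>h\<le>k. u h \<in> Sp V k h" "w = (\<Sum>h\<le>k. u h)"
    using decomp[OF finV card2 assms] by blast
  define u' where "u' = (\<lambda>h. if h \<le> k then u h else 0)"
  have u'1: "\<forall>i\<le>k. u' i \<in> Vsp V k x y i" using u(1) Vsp_eq by (simp add: u'_def)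
  have u'2: "\<forall>i>k. u' i = 0" by (simp add: u'_def)
  have u'3: "w = (\<Sum>i\<le>k. u' i)" using u(2) by (simp add: u'_def)
  show ?thesis
  proof (rule ex1I[of _ u'])
    show "(\<forall>i\<le>k. u' i \<in> Vsp V k x y i) \<and> (\<forall>i>k. u' i = 0) \<and> w = (\<Sum>i\<le>k. u' i)"
      using u'1 u'2 u'3 by blast
  next
    fix v assume v: "(\<forall>i\<le>k. v i \<in> Vsp V k x y i) \<and> (\<forall>i>k. v i = 0) \<and> w = (\<Sum>i\<le>k. v i)"
    define d where "d = (\<lambda>h. v h - u' h)"
    have dS: "\<forall>h\<le>k. d h \<in> Sp V k h"
      using v u'1 Vsp_eq unfolding d_def by (metis M.subspace_diff Sp_subspace)
    have "(\<Sum>h\<le>k. d h) = 0" unfolding d_def using v u'3 by (simp add: sum_subtractf)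
    then have "\<forall>h\<le>k. d h = 0" using uniq0[OF finV dS] by blast
    show "v = u'"
    proof
      fix h show "v h = u' h"
      proof (cases "h \<le> k")
        case True then show ?thesis using \<open>\<forall>h\<le>k. d h = 0\<close> by (simp add: d_def)
      next
        case False then show ?thesis using v u'2 by simp
      qed
    qed
  qed
qed

lemma partD:
  assumes "\<forall>i\<le>k. u i \<in> Vsp V k x y i" "i \<le> k"
  shows "Wv k V (\<Sum>h\<le>k. u h) i = 0 \<longleftrightarrow> u i = 0"
proof -
  have uS: "\<forall>h\<le>k. u h \<in> Sp V k h" using assms(1) Vsp_eq by auto
  have "Wv k V (\<Sum>h\<le>k. u h) i = 0 \<longleftrightarrow>
     (\<forall>ps. dpl V ps \<and> length ps = i \<longrightarrow> ip V k (\<Sum>h\<le>k. u h) (phi2 V k ps) = 0)"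
    using Wv_char[OF finV card2 assms(2)] .
  also have "\<dots> \<longleftrightarrow> (\<forall>ps. dpl V ps \<and> length ps = i \<longrightarrow> ip V k (u i) (phi2 V k ps) = 0)"
  proof -
    have "ip V k (\<Sum>h\<le>k. u h) (phi2 V k ps) = ip V k (u i) (phi2 V k ps)" if "dpl V ps" "length ps = i" for ps
      using ip_decomp[OF finV uS phi2_Sp[OF that(1), of k]] that(2) assms(2) by simp
    then show ?thesis by auto
  qed
  also have "\<dots> \<longleftrightarrow> u i = 0"
  proof
    assume "\<forall>ps. dpl V ps \<and> length ps = i \<longrightarrow> ip V k (u i) (phi2 V k ps) = 0"
    then show "u i = 0" using sp_eq_zero[OF finV] uS assms(2) by blast
  next
    assume "u i = 0" then show "\<forall>ps. dpl V ps \<and> length ps = i \<longrightarrow> ip V k (u i) (phi2 V k ps) = 0"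
      by (simp add: ip_def)
  qed
  finally show ?thesis .
qed

end


context S6 begin

lemma key:
  assumes wi: "wi \<in> WS V k" "wj \<in> WS V k" "disc V k wi wj = 0"
    and Ui: "\<forall>h\<le>k. Ui h \<in> Sp V k h" "wi = (\<Sum>h\<le>k. Ui h)"
    and Uj: "\<forall>h\<le>k. Uj h \<in> Sp V k h" "wj = (\<Sum>h\<le>k. Uj h)"
  shows "\<forall>h\<in>{1..k}. Ui h = 0 \<or> Uj h = 0"
proof (rule ccontr)
  assume "\<not> (\<forall>h\<in>{1..k}. Ui h = 0 \<or> Uj h = 0)"
  define S where "S = {h \<in> {1..k}. Ui h \<noteq> 0 \<and> Uj h \<noteq> 0}"
  have Sne: "S \<noteq> {}" using \<open>\<not> _\<close> by (auto simp: S_def)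
  have fS: "finite S" by (simp add: S_def)
  define H where "H = Max S"
  have HS: "H \<in> S" using Max_in[OF fS Sne] by (simp add: H_def)
  then have H: "1 \<le> H" "H \<le> k" "Ui H \<noteq> 0" "Uj H \<noteq> 0" by (auto simp: S_def)
  have above: "Ui h = 0 \<or> Uj h = 0" if "H < h" "h \<le> k" for h
  proof (rule ccontr)
    assume "\<not> (Ui h = 0 \<or> Uj h = 0)"
    then have "h \<in> S" using that H(1) by (auto simp: S_def)
    then have "h \<le> H" using Max_ge[OF fS] by (simp add: H_def)
    then show False using that by simp
  qed
  define C where "C = dens V k wi * dens V k wj * real (card V choose k)"
  have const: "ip V k (wperm \<pi> wi) wj = C" if "\<pi> permutes V" for \<pi>
  proof -
    have "\<forall>\<pi>\<in>P. \<bar>ip V k (wperm \<pi> wi) wj - C\<bar> = 0"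
      using iffD1[OF max0[of P "\<lambda>\<pi>. \<bar>ip V k (wperm \<pi> wi) wj - C\<bar>"]] perms_fin_ne[OF finV] wi(3)
      unfolding disc_def C_def by simp
    then show ?thesis using that by simp
  qed
  have claim: "ip V k (wperm \<pi> (Ui H)) (phi2 V k ps) * ip V k (Uj H) (phi2 V k ps) = 0"
    if \<pi>: "\<pi> permutes V" and ps: "dpl V ps" "length ps = H" for \<pi> ps
  proof -
    define X where "X = (\<lambda>h. Gop ps (wperm \<pi> (Ui h)))"
    have XS: "X h \<in> Sp V k h" if "h \<le> k" for h
      unfolding X_def using Gop_Sp[OF dpl_in[OF ps(1)] Sp_wperm[OF \<pi>]] Ui(1) that by blast
    have "ps \<noteq> []" using ps(2) H(1) by auto
    then have G0: "ip V k (Gop ps (wperm \<pi> wi)) wj = 0"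
      using Gop_perm_const[OF dpl_in[OF ps(1)] const \<pi>] by simp
    have "Gop ps (wperm \<pi> wi) = (\<Sum>h\<le>k. X h)" unfolding X_def Ui(2) by (simp only: wperm_sum Gop_sum)
    then have "ip V k (Gop ps (wperm \<pi> wi)) wj = (\<Sum>h\<le>k. ip V k (X h) wj)" by (simp add: ip_sum_left)
    also have "\<dots> = (\<Sum>h\<le>k. ip V k (X h) (Uj h))"
    proof (rule sum.cong)
      fix h assume "h \<in> {..k}"
      then have "ip V k wj (X h) = ip V k (Uj h) (X h)" unfolding Uj(2) using ip_decomp[OF finV Uj(1) XS] by simp
      then show "ip V k (X h) wj = ip V k (X h) (Uj h)" by (simp add: ip_comm)
    qed simp
    also have "\<dots> = (\<Sum>h\<le>k. if h = H then ip V k (X H) (Uj H) else 0)"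
    proof (rule sum.cong)
      fix h assume h: "h \<in> {..k}"
      show "ip V k (X h) (Uj h) = (if h = H then ip V k (X H) (Uj H) else 0)"
      proof (cases "h = H")
        case True then show ?thesis by simp
      next
        case False
        show ?thesis
        proof (cases "h < H")
          case True
          have "wperm \<pi> (Ui h) \<in> Sp V k h" using Sp_wperm[OF \<pi>] Ui(1) h by auto
          then have "ip V k (X h) (Uj h) = 0" unfolding X_def
            using Gop_low[OF finV card2 ps(1)] ps(2) H(2) True by auto
          then show ?thesis using False by simp
        next
          case F2: False
          then have "H < h" using False by simp
          then have "Ui h = 0 \<or> Uj h = 0" using above h by auto
          then have "ip V k (X h) (Uj h) = 0"
            unfolding X_def by (auto simp: wperm_zero Gop_zero ip_def)
          then show ?thesis using False by simp
        qed
      qed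
    qed simp
    also have "\<dots> = ip V k (X H) (Uj H)" using H(2) by (simp add: sum.delta)
    also have "\<dots> = ip V k (wperm \<pi> (Ui H)) (phi2 V k ps) * ip V k (Uj H) (phi2 V k ps)
        / real (card (V - pset ps) choose (k - length ps))"
      unfolding X_def using Gop_top[OF finV card2 ps(1)] ps(2) H(2) Sp_wperm[OF \<pi>] Ui(1) Uj(1) by simp
    finally have "ip V k (wperm \<pi> (Ui H)) (phi2 V k ps) * ip V k (Uj H) (phi2 V k ps)
        / real (card (V - pset ps) choose (k - length ps)) = 0" using G0 by simp
    moreover have "real (card (V - pset ps) choose (k - length ps)) > 0"
      using card_V_pset[OF finV ps(1)] card2 ps(2) H(2) by simp
    ultimately show ?thesis by simp
  qed
  obtain qs where qs: "dpl V qs" "length qs = H" "ip V k (Ui H) (phi2 V k qs) \<noteq> 0"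
    using sp_eq_zero[OF finV, of "Ui H" k H] Ui(1) H by auto
  have "ip V k (Uj H) (phi2 V k ps) = 0" if ps: "dpl V ps" "length ps = H" for ps
  proof -
    obtain \<sigma> where \<sigma>: "\<sigma> permutes V" "map (map_prod \<sigma> \<sigma>) ps = qs"
      using exists_perm_dpl[OF ps(1) qs(1)] ps(2) qs(2) by auto
    have ip: "inv \<sigma> permutes V" using permutes_inv[OF \<sigma>(1)] .
    have "ip V k (wperm (inv \<sigma>) (Ui H)) (phi2 V k ps) = ip V k (Ui H) (wperm (inv (inv \<sigma>)) (phi2 V k ps))"
      by (rule wperm_ip[OF ip])
    also have "\<dots> = ip V k (Ui H) (phi2 V k qs)"
      using permutes_inv_inv[OF \<sigma>(1)] wperm_phi2[OF \<sigma>(1)] \<sigma>(2) by simp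
    finally have "ip V k (wperm (inv \<sigma>) (Ui H)) (phi2 V k ps) \<noteq> 0" using qs(3) by simp
    then show ?thesis using claim[OF ip ps] by simp
  qed
  then have "Uj H = 0" using sp_eq_zero[OF finV, of "Uj H" k H] Uj(1) H(2) by auto
  then show False using H(4) by simp
qed

lemma partE:
  assumes t: "1 \<le> t" and W: "\<forall>i\<in>{1..t}. w i \<in> WS V k \<and> w i \<noteq> 0"
    and D: "\<forall>i\<in>{1..t}. \<forall>j\<in>{1..t}. i \<noteq> j \<longrightarrow> disc V k (w i) (w j) = 0"
  shows "\<exists>I::nat \<Rightarrow> nat set.
           (\<Union>i\<in>{1..t}. I i) = {1..k}
         \<and> (\<forall>i\<in>{1..t}. \<forall>j\<in>{1..t}. i \<noteq> j \<longrightarrow> I i \<inter> I j = {})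
         \<and> (\<forall>i\<in>{1..t}. w i \<in> Vsum V k x y (insert 0 (I i)))"
proof -
  define U where "U i = (SOME u. (\<forall>h\<le>k. u h \<in> Sp V k h) \<and> w i = (\<Sum>h\<le>k. u h))" for i
  have U: "(\<forall>h\<le>k. U i h \<in> Sp V k h) \<and> w i = (\<Sum>h\<le>k. U i h)" if "i \<in> {1..t}" for i
  proof -
    have "\<exists>u. (\<forall>h\<le>k. u h \<in> Sp V k h) \<and> w i = (\<Sum>h\<le>k. u h)"
      using decomp[OF finV card2] W that by blast
    then show ?thesis unfolding U_def by (rule someI_ex)
  qed
  have key': "U i h = 0 \<or> U j h = 0" if "i \<in> {1..t}" "j \<in> {1..t}" "i \<noteq> j" "h \<in> {1..k}" for i j h
  proof -
    have wi: "w i \<in> WS V k" "w j \<in> WS V k" using W that(1,2) by auto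
    have dij: "disc V k (w i) (w j) = 0" using D that(1-3) by blast
    have "\<forall>h\<in>{1..k}. U i h = 0 \<or> U j h = 0"
      using key[OF wi dij conjunct1[OF U[OF that(1)]] conjunct2[OF U[OF that(1)]]
          conjunct1[OF U[OF that(2)]] conjunct2[OF U[OF that(2)]]] .
    then show ?thesis using that(4) by blast
  qed
  define own where "own h = (if \<exists>i\<in>{1..t}. U i h \<noteq> 0 then (LEAST i. i \<in> {1..t} \<and> U i h \<noteq> 0) else 1)" for h
  have own_in: "own h \<in> {1..t} \<and> ((\<exists>i\<in>{1..t}. U i h \<noteq> 0) \<longrightarrow> U (own h) h \<noteq> 0)" for h
  proof (cases "\<exists>i\<in>{1..t}. U i h \<noteq> 0")
    case True
    then obtain i0 where i0: "i0 \<in> {1..t}" "U i0 h \<noteq> 0" by blast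
    have L: "(LEAST i. i \<in> {1..t} \<and> U i h \<noteq> 0) \<in> {1..t} \<and> U (LEAST i. i \<in> {1..t} \<and> U i h \<noteq> 0) h \<noteq> 0"
      by (rule LeastI[of "\<lambda>i. i \<in> {1..t} \<and> U i h \<noteq> 0" i0]) (use i0 in blast)
    have "own h = (LEAST i. i \<in> {1..t} \<and> U i h \<noteq> 0)" unfolding own_def by (rule if_P[OF True])
    then show ?thesis using L by simp
  next
    case False
    have "own h = 1" unfolding own_def by (rule if_not_P[OF False])
    then show ?thesis using t False by simp
  qed
  have own_nz: "own h = i" if "i \<in> {1..t}" "U i h \<noteq> 0" "h \<in> {1..k}" for i h
  proof -
    have ex: "\<exists>i\<in>{1..t}. U i h \<noteq> 0" using that by blast
    have m: "own h \<in> {1..t}" "U (own h) h \<noteq> 0" using own_in[of h] ex by auto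
    show "own h = i"
    proof (rule ccontr)
      assume "own h \<noteq> i"
      then have "U (own h) h = 0 \<or> U i h = 0" using key'[OF m(1) that(1) _ that(3)] by blast
      then show False using m(2) that(2) by blast
    qed
  qed
  define I where "I i = {h \<in> {1..k}. own h = i}" for i
  show ?thesis
  proof (intro exI[of _ I] conjI)
    show "(\<Union>i\<in>{1..t}. I i) = {1..k}"
    proof
      show "(\<Union>i\<in>{1..t}. I i) \<subseteq> {1..k}" by (auto simp: I_def)
      show "{1..k} \<subseteq> (\<Union>i\<in>{1..t}. I i)"
      proof
        fix h assume "h \<in> {1..k}"
        then have "h \<in> I (own h)" by (simp add: I_def)
        then show "h \<in> (\<Union>i\<in>{1..t}. I i)" using conjunct1[OF own_in[of h]] by blast
      qed
    qed
    show "\<forall>i\<in>{1..t}. \<forall>j\<in>{1..t}. i \<noteq> j \<longrightarrow> I i \<inter> I j = {}" by (auto simp: I_def)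
    show "\<forall>i\<in>{1..t}. w i \<in> Vsum V k x y (insert 0 (I i))"
    proof
      fix i assume i: "i \<in> {1..t}"
      have sub: "insert 0 (I i) \<subseteq> {..k}" by (auto simp: I_def)
      have "w i = (\<Sum>h\<le>k. U i h)" using U[OF i] by blast
      also have "\<dots> = (\<Sum>h\<in>insert 0 (I i). U i h)"
      proof (rule sum.mono_neutral_right)
        show "finite {..k}" by simp
        show "insert 0 (I i) \<subseteq> {..k}" by fact
        show "\<forall>h\<in>{..k} - insert 0 (I i). U i h = 0"
        proof
          fix h assume h: "h \<in> {..k} - insert 0 (I i)"
          then have h1: "h \<in> {1..k}" "own h \<noteq> i" by (auto simp: I_def)
          show "U i h = 0" using own_nz[OF i _ h1(1)] h1(2) by blast
        qed
      qed
      finally have "w i = (\<Sum>h\<in>insert 0 (I i). U i h)" .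
      moreover have "\<forall>h\<in>insert 0 (I i). U i h \<in> Vsp V k x y h"
        using U[OF i] sub Vsp_eq by auto
      ultimately show "w i \<in> Vsum V k x y (insert 0 (I i))" unfolding Vsum_def by blast
    qed
  qed
qed

end


theorem theorem6p1:
  fixes V :: "'a set" and n k :: nat and x y :: "nat \<Rightarrow> 'a"
  assumes "finite V" and "card V = n" and "1 \<le> k" and "2 * k \<le> n"
    and "x ` {1..k} \<subseteq> V" and "y ` {1..k} \<subseteq> V"
    and "inj_on x {1..k}" and "inj_on y {1..k}"
    and "x ` {1..k} \<inter> y ` {1..k} = {}"
  shows
    "(\<forall>i\<in>{1..k}. \<forall>w\<in>WS V k.
        disc V k w (phi V k x y i) = 0 \<longleftrightarrow> w \<in> orth V k (Vsp V k x y i))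
   \<and> (\<forall>i\<le>k. \<forall>j\<le>k. i \<noteq> j \<longrightarrow>
        (\<forall>u\<in>Vsp V k x y i. \<forall>w\<in>Vsp V k x y j. disc V k u w = 0))
   \<and> (\<forall>w\<in>WS V k. \<exists>!u::nat \<Rightarrow> 'a weighting.
        (\<forall>i\<le>k. u i \<in> Vsp V k x y i) \<and> (\<forall>i>k. u i = 0) \<and> w = (\<Sum>i\<le>k. u i))
   \<and> (\<forall>u::nat \<Rightarrow> 'a weighting. (\<forall>i\<le>k. u i \<in> Vsp V k x y i) \<longrightarrow>
        (\<forall>i\<le>k. Wv k V (\<Sum>h\<le>k. u h) i = 0 \<longleftrightarrow> u i = 0))
   \<and> (\<forall>(t::nat) (w::nat \<Rightarrow> 'a weighting).
        1 \<le> t \<longrightarrow> (\<forall>i\<in>{1..t}. w i \<in> WS V k \<and> w i \<noteq> 0) \<longrightarrow>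
        (\<forall>i\<in>{1..t}. \<forall>j\<in>{1..t}. i \<noteq> j \<longrightarrow> disc V k (w i) (w j) = 0) \<longrightarrow>
        (\<exists>I::nat \<Rightarrow> nat set.
           (\<Union>i\<in>{1..t}. I i) = {1..k}
         \<and> (\<forall>i\<in>{1..t}. \<forall>j\<in>{1..t}. i \<noteq> j \<longrightarrow> I i \<inter> I j = {})
         \<and> (\<forall>i\<in>{1..t}. w i \<in> Vsum V k x y (insert 0 (I i)))))"
  proof -
  interpret S6 V n k x y by (rule S6.intro) (rule assms)+
  show ?thesis
  proof (intro conjI)
    show "\<forall>i\<in>{1..k}. \<forall>w\<in>WS V k.
        disc V k w (phi V k x y i) = 0 \<longleftrightarrow> w \<in> orth V k (Vsp V k x y i)"
    proof (intro ballI)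
      fix i w assume "i \<in> {1..k}" "w \<in> WS V k"
      then show "disc V k w (phi V k x y i) = 0 \<longleftrightarrow> w \<in> orth V k (Vsp V k x y i)" by (rule partA)
    qed
    show "\<forall>i\<le>k. \<forall>j\<le>k. i \<noteq> j \<longrightarrow>
        (\<forall>u\<in>Vsp V k x y i. \<forall>w\<in>Vsp V k x y j. disc V k u w = 0)"
    proof (intro allI impI ballI)
      fix i j u w assume "i \<le> k" "j \<le> k" "i \<noteq> j" "u \<in> Vsp V k x y i" "w \<in> Vsp V k x y j"
      then show "disc V k u w = 0" by (rule partB)
    qed
    show "\<forall>w\<in>WS V k. \<exists>!u::nat \<Rightarrow> 'a weighting.
        (\<forall>i\<le>k. u i \<in> Vsp V k x y i) \<and> (\<forall>i>k. u i = 0) \<and> w = (\<Sum>i\<le>k. u i)"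
    proof (intro ballI)
      fix w assume "w \<in> WS V k"
      then show "\<exists>!u::nat \<Rightarrow> 'a weighting.
        (\<forall>i\<le>k. u i \<in> Vsp V k x y i) \<and> (\<forall>i>k. u i = 0) \<and> w = (\<Sum>i\<le>k. u i)" by (rule partC)
    qed
    show "\<forall>u::nat \<Rightarrow> 'a weighting. (\<forall>i\<le>k. u i \<in> Vsp V k x y i) \<longrightarrow>
        (\<forall>i\<le>k. Wv k V (\<Sum>h\<le>k. u h) i = 0 \<longleftrightarrow> u i = 0)"
    proof (intro allI impI)
      fix u :: "nat \<Rightarrow> 'a weighting" and i
      assume "\<forall>i\<le>k. u i \<in> Vsp V k x y i" "i \<le> k"
      then show "Wv k V (\<Sum>h\<le>k. u h) i = 0 \<longleftrightarrow> u i = 0" by (rule partD)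
    qed
    show "\<forall>(t::nat) (w::nat \<Rightarrow> 'a weighting).
        1 \<le> t \<longrightarrow> (\<forall>i\<in>{1..t}. w i \<in> WS V k \<and> w i \<noteq> 0) \<longrightarrow>
        (\<forall>i\<in>{1..t}. \<forall>j\<in>{1..t}. i \<noteq> j \<longrightarrow> disc V k (w i) (w j) = 0) \<longrightarrow>
        (\<exists>I::nat \<Rightarrow> nat set.
           (\<Union>i\<in>{1..t}. I i) = {1..k}
         \<and> (\<forall>i\<in>{1..t}. \<forall>j\<in>{1..t}. i \<noteq> j \<longrightarrow> I i \<inter> I j = {})
         \<and> (\<forall>i\<in>{1..t}. w i \<in> Vsum V k x y (insert 0 (I i))))"
    proof (intro allI impI)
      fix t :: nat and w :: "nat \<Rightarrow> 'a weighting"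
      assume "1 \<le> t" "\<forall>i\<in>{1..t}. w i \<in> WS V k \<and> w i \<noteq> 0"
        "\<forall>i\<in>{1..t}. \<forall>j\<in>{1..t}. i \<noteq> j \<longrightarrow> disc V k (w i) (w j) = 0"
      then show "\<exists>I::nat \<Rightarrow> nat set.
           (\<Union>i\<in>{1..t}. I i) = {1..k}
         \<and> (\<forall>i\<in>{1..t}. \<forall>j\<in>{1..t}. i \<noteq> j \<longrightarrow> I i \<inter> I j = {})
         \<and> (\<forall>i\<in>{1..t}. w i \<in> Vsum V k x y (insert 0 (I i)))" by (rule partE)
    qed
  qed
qed

end
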